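(* Let $n \geq 2$, $\sigma \in \mathbb{R}$ and $p \in \mathbb{R}\setminus\{0\}$, and let $u \geq 0$ be a non-trivial classical solution of $-\Delta u = |x|^\sigma u^p$ in $\mathbb{R}^n$. Then: (1) the functions $r \mapsto \overline{u}(r)$ and $r \mapsto r^{n-1}\overline{u}'(r)$ are (non-strictly) decreasing on $(0,+\infty)$; (2) $r^{n-1}\overline{u}'(r) \leq 0$ and $\overline{u}(r) \leq u(0)$ for all $r > 0$; (3) $u(0) > 0$.
   Context: A classical solution is a function $u$ in $C^2(\mathbb{R}^n)$ if $\sigma \ge 0$, and in $C(\mathbb{R}^n)\cap C^2(\mathbb{R}^n\setminus\{0\})$ if $\sigma<0$, satisfying the equation pointwise (except at $x=0$ when $\sigma<0$); for $p<0$ this requires $u>0$ where the equation is imposed. The spherical average is $\overline{u}(0) = u(0)$ and $\overline{u}(r) = \frac{1}{|\partial B_r|}\int_{\partial B_r} u \, d\sigma$ for $r>0$, where $B_r$ is the open ball of radius $r$ centred at the origin. *)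

theory Defs
  imports "HOL-Analysis.Analysis"
begin

text \<open>Weight |x|^sigma, with the convention |0|^0 = 1 (and |0|^sigma = 0 for sigma > 0;
  for sigma < 0 the equation is not imposed at 0).\<close>
definition weight :: "real \<Rightarrow> 'a::real_normed_vector \<Rightarrow> real" where
  "weight \<sigma> x = (if x = 0 then (if \<sigma> = 0 then 1 else 0) else norm x powr \<sigma>)"

definition C2_with :: "'a::euclidean_space set \<Rightarrow> ('a \<Rightarrow> real) \<Rightarrow> ('a \<Rightarrow> 'a \<Rightarrow>\<^sub>L real)
    \<Rightarrow> ('a \<Rightarrow> 'a \<Rightarrow>\<^sub>L ('a \<Rightarrow>\<^sub>L real)) \<Rightarrow> bool" where
  "C2_with S u Du D2u \<longleftrightarrow>
     (\<forall>x\<in>S. (u has_derivative blinfun_apply (Du x)) (at x)) \<and>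
     (\<forall>x\<in>S. (Du has_derivative blinfun_apply (D2u x)) (at x)) \<and>
     continuous_on S D2u"

definition lap_of :: "('a::euclidean_space \<Rightarrow>\<^sub>L ('a \<Rightarrow>\<^sub>L real)) \<Rightarrow> real" where
  "lap_of H = (\<Sum>b\<in>Basis. blinfun_apply (blinfun_apply H b) b)"

definition classical_solution :: "real \<Rightarrow> real \<Rightarrow> ('a::euclidean_space \<Rightarrow> real) \<Rightarrow> bool" where
  "classical_solution \<sigma> p u \<longleftrightarrow>
     (let S = (if \<sigma> \<ge> 0 then UNIV else UNIV - {0}) in
       continuous_on UNIV u \<and>
       (\<exists>Du D2u. C2_with S u Du D2u \<and>
          (\<forall>x\<in>S. - lap_of (D2u x) = weight \<sigma> x * (u x powr p))) \<and>
       (p < 0 \<longrightarrow> (\<forall>x\<in>S. u x > 0)))"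

text \<open>The normalised surface measure on the unit sphere is realised as
  the (normalised) cone measure: for r > 0,
  avg_{|w|=1} u(r w) = (1/|B_1|) * integral over B_1 of u(r x/|x|) dx  (polar coordinates).\<close>
definition sph_avg :: "('a::euclidean_space \<Rightarrow> real) \<Rightarrow> real \<Rightarrow> real" where
  "sph_avg u r = (if r = 0 then u 0 else
      integral (ball 0 1) (\<lambda>x. u (r *\<^sub>R (x /\<^sub>R norm x))) / measure lborel (ball (0::'a) 1))"

end

theory Submission
  imports Defs
begin


typedef (overloaded) ('a::euclidean_space) bidx = "{..<DIM('a)}" morphisms bidx_rep bidx_abs
  by (rule exI[of _ 0]) simp

instantiation bidx :: (euclidean_space) linorder
begin
definition "less_eq_bidx (x::'a bidx) (y::'a bidx) = (bidx_rep x \<le> bidx_rep y)"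
definition "less_bidx (x::'a bidx) (y::'a bidx) = (bidx_rep x < bidx_rep y)"
instance by standard (auto simp: less_eq_bidx_def less_bidx_def bidx_rep_inject)
end

instance bidx :: (euclidean_space) wellorder
proof
  fix P :: "'a bidx \<Rightarrow> bool" and a :: "'a bidx"
  assume H: "\<And>x. (\<And>y. y < x \<Longrightarrow> P y) \<Longrightarrow> P x"
  have "\<And>x::'a bidx. bidx_rep x = n \<Longrightarrow> P x" for n
    by (induction n rule: less_induct) (metis H less_bidx_def)
  then show "P a" by blast
qed

instance bidx :: (euclidean_space) finite
proof
  have "(UNIV :: 'a bidx set) = bidx_abs ` {..<DIM('a)}"
    using type_definition.univ[OF type_definition_bidx] .
  then show "finite (UNIV :: 'a bidx set)" by (metis finite_imageI finite_lessThan)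
qed

definition eb :: "nat \<Rightarrow> 'a::euclidean_space" where
  "eb = (SOME f. bij_betw f {..<DIM('a)} (Basis::'a set))"

lemma eb_bij: "bij_betw (eb::nat \<Rightarrow> 'a::euclidean_space) {..<DIM('a)} Basis"
proof -
  obtain h where "bij_betw h {0..<card (Basis::'a set)} (Basis::'a set)"
    using ex_bij_betw_nat_finite[OF finite_Basis] by blast
  then have "\<exists>f. bij_betw f {..<DIM('a)} (Basis::'a set)" by (auto simp: atLeast0LessThan)
  then show ?thesis unfolding eb_def by (rule someI_ex)
qed

definition ebi :: "'a bidx \<Rightarrow> 'a::euclidean_space" where "ebi i = eb (bidx_rep i)"

lemma ebi_bij: "bij_betw (ebi::'a bidx \<Rightarrow> 'a::euclidean_space) UNIV Basis"
proof -
  have "bij_betw bidx_rep (UNIV::'a bidx set) {..<DIM('a)}"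
    unfolding bij_betw_def inj_on_def
    using bidx_rep_inject type_definition.Rep_range[OF type_definition_bidx] by blast
  then have "bij_betw (eb \<circ> bidx_rep) (UNIV::'a bidx set) (Basis::'a set)"
    using bij_betw_trans eb_bij by blast
  then show ?thesis by (simp add: ebi_def[abs_def] comp_def)
qed

lemma sum_ebi: "(\<Sum>i\<in>UNIV. g (ebi i)) = (\<Sum>b\<in>(Basis::'a::euclidean_space set). g b)"
  by (rule sum.reindex_bij_betw[OF ebi_bij])

lemma prod_ebi: "(\<Prod>i\<in>UNIV. g (ebi i)) = (\<Prod>b\<in>(Basis::'a::euclidean_space set). g b)"
  by (rule prod.reindex_bij_betw[OF ebi_bij])

lemma ball_ebi: "(\<forall>b\<in>(Basis::'a::euclidean_space set). P b) \<longleftrightarrow> (\<forall>i. P (ebi i))"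
  using ebi_bij unfolding bij_betw_def by (metis UNIV_I imageE image_eqI)

lemma ebi_Basis: "ebi i \<in> Basis"
  using ebi_bij unfolding bij_betw_def by auto

lemma ebi_inner: "ebi i \<bullet> ebi j = (if i = j then 1 else 0)"
proof -
  have "inj ebi" using ebi_bij unfolding bij_betw_def by auto
  then show ?thesis using inner_Basis[OF ebi_Basis[of i] ebi_Basis[of j]] by (metis injD)
qed

definition Vm :: "'a::euclidean_space \<Rightarrow> real^('a bidx)" where "Vm x = (\<chi> i. x \<bullet> ebi i)"
definition Vi :: "real^('a::euclidean_space bidx) \<Rightarrow> 'a" where "Vi y = (\<Sum>i\<in>UNIV. (y$i) *\<^sub>R ebi i)"

lemma Vi_Vm: "Vi (Vm x) = x"
  unfolding Vi_def Vm_def using sum_ebi[of "\<lambda>b. (x \<bullet> b) *\<^sub>R b"] by (simp add: euclidean_representation)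

lemma Vi_inner: "Vi y \<bullet> ebi j = y $ j"
  unfolding Vi_def by (simp add: inner_sum_left ebi_inner if_distrib cong: if_cong)

lemma Vm_Vi: "Vm (Vi y) = y"
  unfolding Vm_def by (simp add: vec_eq_iff Vi_inner)

lemma linear_Vm: "linear Vm"
  by (rule linearI) (simp_all add: Vm_def vec_eq_iff inner_add_left)

lemma linear_Vi: "linear Vi"
  by (rule linearI) (simp_all add: Vi_def scaleR_add_left sum.distrib scaleR_sum_right)

lemma Vm_inner: "Vm x \<bullet> Vm y = x \<bullet> y"
  unfolding Vm_def inner_vec_def using sum_ebi[of "\<lambda>b. (x \<bullet> b) * (y \<bullet> b)"]
  by (simp add: euclidean_inner[of x y])

lemma Vi_inner2: "Vi x \<bullet> Vi y = x \<bullet> y"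
  by (metis Vm_Vi Vm_inner)

lemma prod_Basis_cart: "(\<Prod>b\<in>Basis. (x::real^'n) \<bullet> b) = (\<Prod>i\<in>UNIV. x $ i)"
  by (simp add: Basis_vec_def cart_eq_inner_axis axis_eq_axis prod.UNION_disjoint)

lemma meas_linear: fixes f :: "'a::euclidean_space \<Rightarrow> 'b::real_normed_vector"
  shows "linear f \<Longrightarrow> f \<in> borel_measurable borel"
  by (simp add: borel_measurable_continuous_onI linear_continuous_on linear_conv_bounded_linear)

lemma Vm_lborel: "distr lborel borel (Vm::'a::euclidean_space \<Rightarrow> real^('a bidx)) = lborel"
proof (rule sym, rule lborel_eqI)
  fix l u :: "real^('a bidx)"
  assume le: "\<And>b. b \<in> Basis \<Longrightarrow> l \<bullet> b \<le> u \<bullet> b"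
  have le': "l $ i \<le> u $ i" for i using le[of "axis i 1"]
    unfolding Basis_vec_def by (auto simp: cart_eq_inner_axis)
  have pre: "Vm -` box l u = box (Vi l) (Vi u)"
    by (auto simp: mem_box_cart mem_box ball_ebi Vi_inner Vm_def)
  have "emeasure (distr lborel borel Vm) (box l u) = emeasure lborel (Vm -` box l u)"
    by (subst emeasure_distr) (auto intro: meas_linear linear_Vm)
  also have "\<dots> = (\<Prod>b\<in>Basis. (Vi u - Vi l) \<bullet> b)"
    unfolding pre emeasure_lborel_box_eq using le'
    by (auto simp: ball_ebi Vi_inner)
  also have "\<dots> = (\<Prod>i\<in>UNIV. (u - l) $ i)"
    using prod_ebi[of "\<lambda>b. (Vi u - Vi l) \<bullet> b"] by (simp add: inner_diff_left Vi_inner)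
  also have "\<dots> = (\<Prod>b\<in>Basis. (u - l) \<bullet> b)" by (simp add: prod_Basis_cart)
  finally show "emeasure (distr lborel borel Vm) (box l u) = (\<Prod>b\<in>Basis. (u - l) \<bullet> b)" .
qed simp

lemma orth_lborel_cart:
  fixes f :: "real^'n::{finite,wellorder} \<Rightarrow> real^'n::_"
  assumes f: "orthogonal_transformation f"
  shows "distr lborel borel f = lborel"
proof (rule sym, rule lborel_eqI)
  fix l u :: "(real, 'n) vec"
  assume le: "\<And>b. b \<in> Basis \<Longrightarrow> l \<bullet> b \<le> u \<bullet> b"
  define g where "g = inv f"
  have g: "orthogonal_transformation g" unfolding g_def by (rule orthogonal_transformation_inv[OF f])
  have bij: "bij f" by (rule orthogonal_transformation_bij[OF f])
  have pre: "f -` box l u = g ` box l u"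
    unfolding g_def using bij by (simp add: bij_vimage_eq_inv_image)
  have meas: "f \<in> borel_measurable borel"
    by (rule meas_linear[OF orthogonal_transformation_linear[OF f]])
  have opn: "open (f -` box l u)"
    by (rule open_vimage) (auto intro: linear_continuous_on linear_conv_bounded_linear[THEN iffD1] orthogonal_transformation_linear[OF f])
  have lm: "g ` box l u \<in> lmeasurable" by (rule measurable_orthogonal_image[OF g lmeasurable_box])
  have "emeasure (distr lborel borel f) (box l u) = emeasure lborel (f -` box l u)"
    by (subst emeasure_distr) (auto intro: meas)
  also have "\<dots> = emeasure lebesgue (f -` box l u)"
    using opn by simp
  also have "\<dots> = measure lebesgue (g ` box l u)"
    unfolding pre using lm by (simp add: emeasure_eq_measure2)
  also have "\<dots> = measure lebesgue (box l u)"
    using measure_orthogonal_image[OF g lmeasurable_box] by simp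
  also have "\<dots> = emeasure lebesgue (box l u)"
    by (simp add: emeasure_eq_measure2)
  also have "\<dots> = emeasure lborel (box l u)" by simp
  also have "\<dots> = (\<Prod>b\<in>Basis. (u - l) \<bullet> b)"
    using le by (simp add: emeasure_lborel_box_eq)
  finally show "emeasure (distr lborel borel f) (box l u) = (\<Prod>b\<in>Basis. (u - l) \<bullet> b)" .
qed simp

lemma Vi_lborel: "distr lborel borel (Vi :: real^('a::euclidean_space bidx) \<Rightarrow> 'a) = lborel"
proof -
  have "distr lborel borel (Vi :: real^('a::euclidean_space bidx) \<Rightarrow> 'a) = distr (distr lborel borel (Vm::'a \<Rightarrow> _)) borel Vi"
    by (simp add: Vm_lborel)
  also have "\<dots> = distr lborel borel (Vi \<circ> Vm)"
    by (rule distr_distr) (auto intro: meas_linear linear_Vi linear_Vm)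
  also have "\<dots> = distr lborel lborel (\<lambda>x. x)" by (rule distr_cong) (auto simp: Vi_Vm)
  finally show ?thesis by simp
qed

lemma orth_lborel:
  fixes R :: "'a::euclidean_space \<Rightarrow> 'a"
  assumes R: "orthogonal_transformation R"
  shows "distr lborel borel R = lborel"
proof -
  define R' where "R' = (\<lambda>y::real^('a bidx). Vm (R (Vi y)))"
  have lin: "linear R'" unfolding R'_def
    using linear_compose[OF linear_compose[OF linear_Vi orthogonal_transformation_linear[OF R]] linear_Vm]
    by (simp add: comp_def)
  have "orthogonal_transformation R'"
    unfolding orthogonal_transformation_def using lin R
    by (simp add: R'_def Vm_inner Vi_inner2 orthogonal_transformation_def)
  then have R'l: "distr lborel borel R' = lborel" by (rule orth_lborel_cart)
  have eq: "R = Vi \<circ> R' \<circ> Vm" by (simp add: fun_eq_iff R'_def Vi_Vm)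
  have "distr lborel borel R = distr (distr lborel borel Vm) borel (Vi \<circ> R')"
    unfolding eq
    by (subst distr_distr) (auto intro!: meas_linear linear_Vi linear_Vm linear_compose lin simp: comp_assoc)
  also have "\<dots> = distr (distr lborel borel R') borel Vi"
    by (simp add: Vm_lborel, subst distr_distr) (auto intro!: meas_linear linear_Vi lin)
  also have "\<dots> = lborel" by (simp add: R'l Vi_lborel)
  finally show ?thesis .
qed


abbreviation "punc \<equiv> ball (0::'a::euclidean_space) 1 - {0}"

lemma rot_int:
  fixes R :: "'a::euclidean_space \<Rightarrow> 'a" and f :: "'a \<Rightarrow> real"
  assumes R: "orthogonal_transformation R" and fc: "continuous_on (ball 0 1 - {0}) f"
    and B: "\<And>x. x \<in> ball 0 1 - {0} \<Longrightarrow> \<bar>f x\<bar> \<le> B"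
  shows "integral (ball 0 1 - {0}) (\<lambda>x. f (R x)) = integral (ball 0 1 - {0}) f"
proof -
  let ?T = "ball (0::'a) 1 - {0}"
  have nR: "norm (R x) = norm x" for x using R orthogonal_transformation by auto
  have R0: "R x = 0 \<longleftrightarrow> x = 0" for x using nR[of x] by (metis norm_eq_zero)
  have ind: "indicator ?T (R x) = (indicator ?T x :: real)" for x
    by (simp add: indicator_def nR R0)
  have Tb: "?T \<in> sets borel" by (intro borel_open open_Diff) auto
  define g where "g x = indicator ?T x *\<^sub>R f x" for x
  have gm: "g \<in> borel_measurable borel"
    unfolding g_def[abs_def] by (rule borel_measurable_continuous_on_indicator[OF Tb fc])
  have Rm: "R \<in> borel_measurable borel"
    by (rule meas_linear[OF orthogonal_transformation_linear[OF R]])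
  have Rm': "R \<in> measurable lborel borel" using Rm by simp
  have gint: "integrable lborel g"
  proof (rule integrableI_bounded_set[where A="?T" and B=B])
    show "emeasure lborel ?T < \<infinity>" by (rule emeasure_bounded_finite) auto
  qed (auto simp: Tb gm g_def B)
  have gRint: "integrable lborel (\<lambda>x. g (R x))"
    using gint integrable_distr_eq[OF Rm' gm] orth_lborel[OF R] by simp
  have s1: "set_integrable lborel ?T f" unfolding set_integrable_def using gint unfolding g_def[abs_def] by simp
  have s2: "set_integrable lborel ?T (\<lambda>x. f (R x))" unfolding set_integrable_def
    using gRint by (simp add: g_def ind)
  have "integral ?T (\<lambda>x. f (R x)) = (LINT x:?T|lborel. f (R x))"
    using set_borel_integral_eq_integral(2)[OF s2] by simp
  also have "\<dots> = integral\<^sup>L lborel (\<lambda>x. g (R x))"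
    unfolding set_lebesgue_integral_def g_def by (simp add: ind)
  also have "\<dots> = integral\<^sup>L (distr lborel borel R) g"
    by (rule integral_distr[OF Rm' gm, symmetric])
  also have "\<dots> = integral\<^sup>L lborel g" by (simp add: orth_lborel[OF R])
  also have "\<dots> = (LINT x:?T|lborel. f x)"
    unfolding set_lebesgue_integral_def g_def by simp
  also have "\<dots> = integral ?T f"
    using set_borel_integral_eq_integral(2)[OF s1] by simp
  finally show ?thesis .
qed



definition Avg :: "('a::euclidean_space \<Rightarrow> real) \<Rightarrow> real" where
  "Avg h = integral (ball 0 1 - {0}) (\<lambda>x. h (x /\<^sub>R norm x))"

lemma sph_nrm: "x \<noteq> 0 \<Longrightarrow> x /\<^sub>R norm x \<in> sphere 0 1"
  by simp

lemma cont_nrm: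
  assumes "continuous_on (sphere 0 1) h"
  shows "continuous_on (ball 0 1 - {0}) (\<lambda>x. h (x /\<^sub>R norm x))"
proof (rule continuous_on_compose2[OF assms])
  show "continuous_on (ball 0 1 - {0}) (\<lambda>x. x /\<^sub>R norm x)"
    by (intro continuous_intros) auto
  show "(\<lambda>x. x /\<^sub>R norm x) ` (ball 0 1 - {0}) \<subseteq> sphere 0 1" using sph_nrm by blast
qed

lemma bnd_sph:
  fixes h :: "'a::euclidean_space \<Rightarrow> real"
  assumes "continuous_on (sphere 0 1) h"
  obtains B where "\<And>\<omega>. \<omega> \<in> sphere 0 1 \<Longrightarrow> \<bar>h \<omega>\<bar> \<le> B"
proof -
  have "compact (h ` sphere 0 1)" by (rule compact_continuous_image[OF assms compact_sphere])
  then obtain B where "\<forall>y\<in>h ` sphere 0 1. norm y \<le> B" using compact_imp_bounded bounded_iff by blast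
  then have "\<And>\<omega>. \<omega> \<in> sphere 0 1 \<Longrightarrow> \<bar>h \<omega>\<bar> \<le> B" by (simp del: mem_sphere)
  then show ?thesis by (rule that)
qed

lemma punc_lmeas: "ball (0::'a::euclidean_space) 1 - {0} \<in> lmeasurable"
  by (rule lmeasurable_open) auto

lemma int_nrm:
  fixes h :: "'a::euclidean_space \<Rightarrow> real"
  assumes hc: "continuous_on (sphere 0 1) h"
  shows "(\<lambda>x. h (x /\<^sub>R norm x)) integrable_on (ball 0 1 - {0})"
proof -
  obtain B where B: "\<And>\<omega>. \<omega> \<in> sphere 0 1 \<Longrightarrow> \<bar>h \<omega>\<bar> \<le> B" using bnd_sph[OF hc] by blast
  show ?thesis
  proof (rule measurable_bounded_by_integrable_imp_integrable)
    show "(\<lambda>x. h (x /\<^sub>R norm x)) \<in> borel_measurable (lebesgue_on (ball 0 1 - {0}))"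
      by (rule continuous_imp_measurable_on_sets_lebesgue[OF cont_nrm[OF hc]]) (use punc_lmeas in auto)
    show "(\<lambda>x. B) integrable_on ball 0 1 - {0}" by (rule integrable_on_const[OF punc_lmeas])
    show "norm (h (x /\<^sub>R norm x)) \<le> B" if "x \<in> ball 0 1 - {0}" for x
      using B[of "x /\<^sub>R norm x"] that by simp
    show "ball 0 1 - {0} \<in> sets lebesgue" using punc_lmeas by auto
  qed
qed

lemma integral_const_punc: "integral (ball (0::'a::euclidean_space) 1 - {0}) (\<lambda>x. c) = c * measure lebesgue (ball (0::'a) 1 - {0})"
proof -
  have "integral (ball (0::'a) 1 - {0}) (\<lambda>x. c) = integral (ball (0::'a) 1 - {0}) (\<lambda>x. c * 1)" by simp
  also have "\<dots> = c * integral (ball (0::'a) 1 - {0}) (\<lambda>x. 1)" by (rule integral_mult_right)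
  also have "\<dots> = c * measure lebesgue (ball (0::'a) 1 - {0})" by (simp only: lmeasure_integral[OF punc_lmeas])
  finally show ?thesis .
qed


lemma mvt_bound:
  fixes \<psi> \<psi>' :: "real \<Rightarrow> real"
  assumes der: "\<And>s. s \<in> closed_segment t0 y \<Longrightarrow> (\<psi> has_real_derivative \<psi>' s) (at s)"
    and bnd: "\<And>s. s \<in> closed_segment t0 y \<Longrightarrow> \<bar>\<psi>' s\<bar> \<le> e"
  shows "\<bar>\<psi> y - \<psi> t0\<bar> \<le> e * \<bar>y - t0\<bar>"
proof (cases "t0 < y")
  case True
  then obtain z where z: "t0 < z" "z < y" "\<psi> y - \<psi> t0 = (y - t0) * \<psi>' z"
    using MVT2[of t0 y \<psi> \<psi>'] der by (auto simp: closed_segment_eq_real_ivl)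
  have "\<bar>\<psi>' z\<bar> \<le> e" using bnd z by (auto simp: closed_segment_eq_real_ivl)
  then show ?thesis using z True by (simp add: abs_mult mult.commute mult_right_mono)
next
  case False
  show ?thesis
  proof (cases "y < t0")
    case True
    then obtain z where z: "y < z" "z < t0" "\<psi> t0 - \<psi> y = (t0 - y) * \<psi>' z"
      using MVT2[of y t0 \<psi> \<psi>'] der by (auto simp: closed_segment_eq_real_ivl)
    have "\<bar>\<psi>' z\<bar> \<le> e" using bnd z by (auto simp: closed_segment_eq_real_ivl)
    then show ?thesis using z True
      by (simp add: abs_mult mult.commute mult_right_mono abs_minus_commute)
  next
    case False
    with \<open>\<not> t0 < y\<close> have "y = t0" by auto
    then show ?thesis by simp
  qed
qed

lemma deriv_avg:
  fixes F G :: "real \<Rightarrow> 'a::euclidean_space \<Rightarrow> real"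
  assumes d: "d > 0"
    and Fd: "\<And>t \<omega>. t \<in> ball t0 d \<Longrightarrow> \<omega> \<in> sphere 0 1 \<Longrightarrow> ((\<lambda>t. F t \<omega>) has_real_derivative G t \<omega>) (at t)"
    and Fc: "\<And>t. t \<in> ball t0 d \<Longrightarrow> continuous_on (sphere 0 1) (F t)"
    and Gc: "continuous_on (cball t0 d \<times> sphere 0 1) (\<lambda>(t,\<omega>). G t \<omega>)"
  shows "((\<lambda>t. Avg (F t)) has_real_derivative Avg (G t0)) (at t0)"
proof -
  let ?T = "ball (0::'a) 1 - {0}"
  let ?K = "cball t0 d \<times> sphere (0::'a) 1"
  let ?\<mu> = "measure lebesgue ?T"
  have Gc0: "continuous_on (sphere 0 1) (G t0)"
  proof -
    have "continuous_on (sphere 0 1) ((\<lambda>(t,\<omega>). G t \<omega>) \<circ> (\<lambda>\<omega>::'a. (t0, \<omega>)))"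
      by (rule continuous_on_compose[OF _ continuous_on_subset[OF Gc]]) (auto intro!: continuous_intros simp: d less_imp_le)
    then show ?thesis by (simp add: comp_def)
  qed
  have Gc1: "continuous_on ?K (\<lambda>p. G (fst p) (snd p))"
    using Gc by (simp add: case_prod_beta')
  have uc: "uniformly_continuous_on ?K (\<lambda>p. G (fst p) (snd p))"
    by (rule compact_uniformly_continuous[OF Gc1]) (intro compact_Times compact_cball compact_sphere)
  have t0K: "t0 \<in> ball t0 d" using d by simp
  show ?thesis
    unfolding has_field_derivative_def has_derivative_at_alt
  proof (intro conjI allI impI)
    show "bounded_linear ((*) (Avg (G t0)))" by (rule bounded_linear_mult_right)
    fix e :: real assume e: "e > 0"
    have mu0: "?\<mu> \<ge> 0" by simp
    define e' where "e' = e / (?\<mu> + 1)"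
    have e': "e' > 0" unfolding e'_def using e mu0 by (metis add_nonneg_pos divide_pos_pos zero_less_one)
    obtain \<delta> where \<delta>: "\<delta> > 0"
      and uc': "\<And>p q. p \<in> ?K \<Longrightarrow> q \<in> ?K \<Longrightarrow> dist q p < \<delta> \<Longrightarrow> dist (G (fst q) (snd q)) (G (fst p) (snd p)) < e'"
      using uc e' unfolding uniformly_continuous_on_def by metis
    show "\<exists>\<delta>>0. \<forall>y. norm (y - t0) < \<delta> \<longrightarrow> norm (Avg (F y) - Avg (F t0) - Avg (G t0) * (y - t0)) \<le> e * norm (y - t0)"
    proof (intro exI[of _ "min \<delta> d"] conjI allI impI)
      show "min \<delta> d > 0" using \<delta> d by simp
      fix y assume y: "norm (y - t0) < min \<delta> d"
      have seg: "s \<in> ball t0 d" "\<bar>s - t0\<bar> < \<delta>" if "s \<in> closed_segment t0 y" for s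
      proof -
        have "\<bar>s - t0\<bar> \<le> \<bar>y - t0\<bar>" using that
          by (auto simp: closed_segment_eq_real_ivl split: if_splits)
        then show "s \<in> ball t0 d" "\<bar>s - t0\<bar> < \<delta>" using y by (auto simp: dist_norm)
      qed
      have yb: "y \<in> ball t0 d" using seg(1)[of y] by simp
      have pw: "\<bar>F y \<omega> - F t0 \<omega> - G t0 \<omega> * (y - t0)\<bar> \<le> e' * \<bar>y - t0\<bar>" if \<omega>: "\<omega> \<in> sphere 0 1" for \<omega>
      proof -
        have "\<bar>(F y \<omega> - G t0 \<omega> * y) - (F t0 \<omega> - G t0 \<omega> * t0)\<bar> \<le> e' * \<bar>y - t0\<bar>"
        proof (rule mvt_bound[where \<psi>="\<lambda>s. F s \<omega> - G t0 \<omega> * s" and \<psi>'="\<lambda>s. G s \<omega> - G t0 \<omega>"])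
          fix s assume s: "s \<in> closed_segment t0 y"
          show "((\<lambda>s. F s \<omega> - G t0 \<omega> * s) has_real_derivative G s \<omega> - G t0 \<omega>) (at s)"
            using Fd[OF seg(1)[OF s] \<omega>] by (auto intro!: derivative_eq_intros)
          have "dist (G (fst (s, \<omega>)) (snd (s, \<omega>))) (G (fst (t0, \<omega>)) (snd (t0, \<omega>))) < e'"
            by (rule uc') (use seg[OF s] \<omega> d in \<open>auto simp: dist_Pair_Pair dist_real_def\<close>)
          then show "\<bar>G s \<omega> - G t0 \<omega>\<bar> \<le> e'" by (simp add: dist_real_def)
        qed
        then show ?thesis by (simp add: algebra_simps)
      qed
      have iFy: "(\<lambda>x. F y (x /\<^sub>R norm x)) integrable_on ?T" by (rule int_nrm[OF Fc[OF yb]])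
      have iF0: "(\<lambda>x. F t0 (x /\<^sub>R norm x)) integrable_on ?T" by (rule int_nrm[OF Fc[OF t0K]])
      have iG0: "(\<lambda>x. G t0 (x /\<^sub>R norm x) * (y - t0)) integrable_on ?T"
        by (rule integrable_on_mult_left[OF int_nrm[OF Gc0]])
      have eq: "Avg (F y) - Avg (F t0) - Avg (G t0) * (y - t0) =
          integral ?T (\<lambda>x. F y (x /\<^sub>R norm x) - F t0 (x /\<^sub>R norm x) - G t0 (x /\<^sub>R norm x) * (y - t0))"
        unfolding Avg_def
        by (simp add: integral_diff iFy iF0 iG0 integrable_diff integral_mult_left)
      have "norm (integral ?T (\<lambda>x. F y (x /\<^sub>R norm x) - F t0 (x /\<^sub>R norm x) - G t0 (x /\<^sub>R norm x) * (y - t0)))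
            \<le> integral ?T (\<lambda>x. e' * \<bar>y - t0\<bar>)"
      proof (rule integral_norm_bound_integral)
        show "(\<lambda>x. F y (x /\<^sub>R norm x) - F t0 (x /\<^sub>R norm x) - G t0 (x /\<^sub>R norm x) * (y - t0)) integrable_on ?T"
          by (intro integrable_diff iFy iF0 iG0)
        show "(\<lambda>x. e' * \<bar>y - t0\<bar>) integrable_on ?T" by (rule integrable_on_const[OF punc_lmeas])
        show "norm (F y (x /\<^sub>R norm x) - F t0 (x /\<^sub>R norm x) - G t0 (x /\<^sub>R norm x) * (y - t0)) \<le> e' * \<bar>y - t0\<bar>"
          if "x \<in> ?T" for x using pw[of "x /\<^sub>R norm x"] that by simp
      qed
      also have "\<dots> = e' * \<bar>y - t0\<bar> * ?\<mu>" by (rule integral_const_punc)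
      also have "\<dots> \<le> e * \<bar>y - t0\<bar>"
      proof -
        have "e' * ?\<mu> \<le> e"
        proof -
          obtain m where m: "m = ?\<mu>" by blast
          have "m \<ge> 0" using m mu0 by simp
          then have "e / (m + 1) * m \<le> e" using e by (simp add: field_simps)
          then show ?thesis using m unfolding e'_def by simp
        qed
        then have "e' * ?\<mu> * \<bar>y - t0\<bar> \<le> e * \<bar>y - t0\<bar>" by (simp add: mult_right_mono)
        then show ?thesis by (simp add: algebra_simps)
      qed
      finally show "norm (Avg (F y) - Avg (F t0) - Avg (G t0) * (y - t0)) \<le> e * norm (y - t0)"
        using eq by simp
    qed
  qed
qed



definition rot :: "'a::euclidean_space \<Rightarrow> 'a \<Rightarrow> real \<Rightarrow> 'a \<Rightarrow> 'a" where
  "rot b c t x = x + (cos t - 1) *\<^sub>R ((x \<bullet> b) *\<^sub>R b + (x \<bullet> c) *\<^sub>R c) + sin t *\<^sub>R ((x \<bullet> b) *\<^sub>R c - (x \<bullet> c) *\<^sub>R b)"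

definition rot' :: "'a::euclidean_space \<Rightarrow> 'a \<Rightarrow> real \<Rightarrow> 'a \<Rightarrow> 'a" where
  "rot' b c t x = (- sin t) *\<^sub>R ((x \<bullet> b) *\<^sub>R b + (x \<bullet> c) *\<^sub>R c) + cos t *\<^sub>R ((x \<bullet> b) *\<^sub>R c - (x \<bullet> c) *\<^sub>R b)"

definition rotA :: "'a::euclidean_space \<Rightarrow> 'a \<Rightarrow> 'a \<Rightarrow> 'a" where
  "rotA b c x = (x \<bullet> b) *\<^sub>R c - (x \<bullet> c) *\<^sub>R b"

lemma linear_rot: "linear (rot b c t)"
  by (rule linearI) (simp_all add: rot_def algebra_simps inner_add_left)

lemma rot_inner_self:
  assumes b: "b \<in> Basis" and c: "c \<in> Basis" and bc: "b \<noteq> c"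
  shows "rot b c t x \<bullet> rot b c t x = x \<bullet> x"
proof -
  have bb: "b \<bullet> b = 1" and cc: "c \<bullet> c = 1" and bc0: "b \<bullet> c = 0" and cb0: "c \<bullet> b = 0"
    using b c bc by (auto simp: inner_Basis)
  define p where "p = x \<bullet> b"
  define q where "q = x \<bullet> c"
  define C where "C = cos t"
  define S where "S = sin t"
  have CS: "C * C + S * S = 1" unfolding C_def S_def by (metis power2_eq_square sin_cos_squared_add2)
  have eq: "rot b c t x = x + (C - 1) *\<^sub>R (p *\<^sub>R b + q *\<^sub>R c) + S *\<^sub>R (p *\<^sub>R c - q *\<^sub>R b)"
    by (simp add: rot_def p_def q_def C_def S_def)
  have "rot b c t x \<bullet> rot b c t x = x \<bullet> x + 2 * (C - 1) * (p * p + q * q) + ((C - 1) * (C - 1) + S * S) * (p * p + q * q)"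
    unfolding eq by (simp add: inner_add_left inner_add_right inner_diff_left inner_diff_right bb cc bc0 cb0
        inner_commute[of b x] inner_commute[of c x] p_def[symmetric] q_def[symmetric] algebra_simps)
  also have "\<dots> = x \<bullet> x" using CS by (simp add: algebra_simps)
  finally show ?thesis .
qed

lemma orth_rot:
  assumes "b \<in> Basis" "c \<in> Basis" "b \<noteq> c"
  shows "orthogonal_transformation (rot b c t)"
  unfolding orthogonal_transformation using linear_rot rot_inner_self[OF assms]
  by (simp add: norm_eq_sqrt_inner)

lemma rot_norm:
  assumes "b \<in> Basis" "c \<in> Basis" "b \<noteq> c"
  shows "norm (rot b c t x) = norm x"
  using orth_rot[OF assms] unfolding orthogonal_transformation by blast

lemma rot_deriv: "((\<lambda>t. rot b c t x) has_vector_derivative rot' b c t x) (at t)"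
  unfolding rot_def rot'_def
  by (auto intro!: derivative_eq_intros simp: has_vector_derivative_def algebra_simps)

lemma rot0: "rot b c 0 x = x" "rot' b c 0 x = rotA b c x"
  by (simp_all add: rot_def rot'_def rotA_def)

lemma cont_rot: "continuous_on S (\<lambda>p. rot b c (fst p) (snd p))"
  unfolding rot_def by (intro continuous_intros)

lemma cont_rot': "continuous_on S (\<lambda>p. rot' b c (fst p) (snd p))"
  unfolding rot'_def by (intro continuous_intros)


lemma avg_rot:
  fixes h :: "'a::euclidean_space \<Rightarrow> real"
  assumes bc: "b \<in> Basis" "c \<in> Basis" "b \<noteq> c" and hc: "continuous_on (sphere 0 1) h"
  shows "Avg (\<lambda>\<omega>. h (rot b c t \<omega>)) = Avg h"
proof -
  obtain B where B: "\<And>\<omega>. \<omega> \<in> sphere 0 1 \<Longrightarrow> \<bar>h \<omega>\<bar> \<le> B" using bnd_sph[OF hc] by blast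
  have eq: "rot b c t (x /\<^sub>R norm x) = rot b c t x /\<^sub>R norm (rot b c t x)" for x
    using linear_rot[of b c t] rot_norm[OF bc, of t x]
    by (simp add: linear_cmul)
  have "Avg (\<lambda>\<omega>. h (rot b c t \<omega>)) = integral (ball 0 1 - {0}) (\<lambda>x. (\<lambda>y. h (y /\<^sub>R norm y)) (rot b c t x))"
    unfolding Avg_def eq by simp
  also have "\<dots> = integral (ball 0 1 - {0}) (\<lambda>y. h (y /\<^sub>R norm y))"
  proof (rule rot_int[OF orth_rot[OF bc] cont_nrm[OF hc]])
    show "\<bar>h (x /\<^sub>R norm x)\<bar> \<le> B" if "x \<in> ball 0 1 - {0}" for x
      using B[of "x /\<^sub>R norm x"] that by simp
  qed
  finally show ?thesis unfolding Avg_def .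
qed

lemma rot_sphere:
  assumes bc: "b \<in> Basis" "c \<in> Basis" "b \<noteq> c"
  shows "\<omega> \<in> sphere 0 1 \<Longrightarrow> rot b c t \<omega> \<in> sphere 0 1"
  using rot_norm[OF bc] by simp

lemma rot_zero:
  fixes w :: "'a::euclidean_space \<Rightarrow> real" and Dw :: "'a \<Rightarrow> 'a \<Rightarrow> real"
  assumes bc: "b \<in> Basis" "c \<in> Basis" "b \<noteq> c"
    and U: "open U" "sphere 0 1 \<subseteq> U"
    and wd: "\<And>y. y \<in> U \<Longrightarrow> (w has_derivative Dw y) (at y)"
    and Dwc: "continuous_on (U \<times> UNIV) (\<lambda>(y,h). Dw y h)"
  shows "Avg (\<lambda>\<omega>. Dw \<omega> (rotA b c \<omega>)) = 0"
proof -
  have wc: "continuous_on U w"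
    using wd by (meson continuous_at_imp_continuous_on has_derivative_continuous)
  have wcs: "continuous_on (sphere 0 1) w" using continuous_on_subset[OF wc U(2)] .
  have Fc: "continuous_on (sphere 0 1) (\<lambda>\<omega>. w (rot b c t \<omega>))" for t
  proof (rule continuous_on_compose2[OF wcs])
    show "continuous_on (sphere 0 1) (rot b c t)"
      using linear_continuous_on[OF linear_conv_bounded_linear[THEN iffD1, OF linear_rot]] .
  qed (use rot_sphere[OF bc] in auto)
  have Fd: "((\<lambda>t. w (rot b c t \<omega>)) has_real_derivative Dw (rot b c t \<omega>) (rot' b c t \<omega>)) (at t)"
    if "\<omega> \<in> sphere 0 1" for t \<omega>
  proof -
    have y: "rot b c t \<omega> \<in> U" using rot_sphere[OF bc that] U(2) by blast
    have wd': "(w has_derivative Dw (rot b c t \<omega>)) (at (rot b c t \<omega>))" by (rule wd[OF y])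
    have lin: "linear (Dw (rot b c t \<omega>))" using has_derivative_linear[OF wd'] .
    have g: "((\<lambda>t. rot b c t \<omega>) has_derivative (\<lambda>h. h *\<^sub>R rot' b c t \<omega>)) (at t)"
      using rot_deriv[of b c \<omega> t] by (simp add: has_vector_derivative_def)
    have "((\<lambda>t. w (rot b c t \<omega>)) has_derivative (Dw (rot b c t \<omega>) \<circ> (\<lambda>h. h *\<^sub>R rot' b c t \<omega>))) (at t)"
      using diff_chain_at[OF g wd'] by (simp add: comp_def)
    moreover have "(Dw (rot b c t \<omega>) \<circ> (\<lambda>h. h *\<^sub>R rot' b c t \<omega>)) = (*) (Dw (rot b c t \<omega>) (rot' b c t \<omega>))"
      using lin by (auto simp: fun_eq_iff linear_cmul)
    ultimately show ?thesis unfolding has_field_derivative_def by simp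
  qed
  have Gc: "continuous_on (cball 0 1 \<times> sphere 0 1) (\<lambda>(t, \<omega>). Dw (rot b c t \<omega>) (rot' b c t \<omega>))"
  proof -
    have "continuous_on (cball 0 1 \<times> sphere 0 1) ((\<lambda>(y,h). Dw y h) \<circ> (\<lambda>p. (rot b c (fst p) (snd p), rot' b c (fst p) (snd p))))"
    proof (rule continuous_on_compose[OF _ continuous_on_subset[OF Dwc]])
      show "continuous_on (cball 0 1 \<times> sphere 0 1) (\<lambda>p. (rot b c (fst p) (snd p), rot' b c (fst p) (snd p)))"
        by (intro continuous_on_Pair cont_rot cont_rot')
      show "(\<lambda>p. (rot b c (fst p) (snd p), rot' b c (fst p) (snd p))) ` (cball 0 1 \<times> sphere 0 1) \<subseteq> U \<times> UNIV"
        using rot_sphere[OF bc] U(2) by auto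
    qed
    then show ?thesis by (simp add: comp_def case_prod_beta')
  qed
  have D: "((\<lambda>t. Avg (\<lambda>\<omega>. w (rot b c t \<omega>))) has_real_derivative Avg (\<lambda>\<omega>. Dw (rot b c 0 \<omega>) (rot' b c 0 \<omega>))) (at 0)"
    by (rule deriv_avg[where d=1]) (auto intro: Fd Fc Gc)
  have const: "(\<lambda>t. Avg (\<lambda>\<omega>. w (rot b c t \<omega>))) = (\<lambda>t. Avg w)"
    using avg_rot[OF bc wcs] by simp
  have "((\<lambda>t. Avg w) has_real_derivative 0) (at 0)" by simp
  then have "Avg (\<lambda>\<omega>. Dw (rot b c 0 \<omega>) (rot' b c 0 \<omega>)) = 0"
    using D const by (metis DERIV_unique)
  then show ?thesis by (simp add: rot0)
qed



abbreviation app2 :: "('a::euclidean_space \<Rightarrow>\<^sub>L 'a \<Rightarrow>\<^sub>L real) \<Rightarrow> 'a \<Rightarrow> 'a \<Rightarrow> real" where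
  "app2 H x y \<equiv> blinfun_apply (blinfun_apply H x) y"

lemma bil_expand:
  fixes H :: "'a::euclidean_space \<Rightarrow>\<^sub>L 'a \<Rightarrow>\<^sub>L real"
  shows "app2 H x y = (\<Sum>b\<in>Basis. \<Sum>c\<in>Basis. (x \<bullet> b) * (y \<bullet> c) * app2 H b c)"
proof -
  have "app2 H x y = app2 H (\<Sum>b\<in>Basis. (x \<bullet> b) *\<^sub>R b) (\<Sum>c\<in>Basis. (y \<bullet> c) *\<^sub>R c)"
    by (simp add: euclidean_representation)
  also have "\<dots> = (\<Sum>b\<in>Basis. \<Sum>c\<in>Basis. (x \<bullet> b) * (y \<bullet> c) * app2 H b c)"
    apply (simp add: blinfun.sum_left blinfun.sum_right blinfun.scaleR_left blinfun.scaleR_right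
        sum_distrib_left mult.assoc)
    apply (subst sum.swap)
    apply (simp add: mult.left_commute)
    done
  finally show ?thesis .
qed

lemma lin_expand:
  fixes L :: "'a::euclidean_space \<Rightarrow>\<^sub>L real"
  shows "blinfun_apply L x = (\<Sum>c\<in>Basis. (x \<bullet> c) * blinfun_apply L c)"
proof -
  have "blinfun_apply L x = blinfun_apply L (\<Sum>c\<in>Basis. (x \<bullet> c) *\<^sub>R c)"
    by (simp add: euclidean_representation)
  also have "\<dots> = (\<Sum>c\<in>Basis. (x \<bullet> c) * blinfun_apply L c)"
    by (simp add: blinfun.sum_right blinfun.scaleR_right)
  finally show ?thesis .
qed

lemma sum_H:
  fixes H :: "'a::euclidean_space \<Rightarrow>\<^sub>L 'a \<Rightarrow>\<^sub>L real"
  shows "(\<Sum>b\<in>Basis. \<Sum>c\<in>Basis - {b}. app2 H (rotA b c x) (rotA b c x))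
       = 2 * ((x \<bullet> x) * (\<Sum>b\<in>Basis. app2 H b b) - app2 H x x)"
proof -
  define P where "P b = x \<bullet> b" for b
  have z: "app2 H (rotA b b x) (rotA b b x) = 0" for b by (simp add: rotA_def)
  have s1: "(\<Sum>c\<in>Basis - {b}. app2 H (rotA b c x) (rotA b c x)) = (\<Sum>c\<in>Basis. app2 H (rotA b c x) (rotA b c x))"
    if "b \<in> Basis" for b
    using that by (simp add: sum_diff1 z)
  have e: "app2 H (rotA b c x) (rotA b c x) = P b * P b * app2 H c c - P b * P c * app2 H c b - P c * P b * app2 H b c + P c * P c * app2 H b b" for b c
    by (simp add: rotA_def P_def blinfun.diff_left blinfun.diff_right blinfun.scaleR_left blinfun.scaleR_right algebra_simps)
  have xx: "x \<bullet> x = (\<Sum>b\<in>Basis. P b * P b)" unfolding P_def by (rule euclidean_inner)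
  have Hxx: "app2 H x x = (\<Sum>b\<in>Basis. \<Sum>c\<in>Basis. P b * P c * app2 H b c)" unfolding P_def by (rule bil_expand)
  have Hxx': "app2 H x x = (\<Sum>b\<in>Basis. \<Sum>c\<in>Basis. P b * P c * app2 H c b)"
    unfolding Hxx by (subst sum.swap) (simp add: mult.commute)
  have t1: "(\<Sum>b\<in>Basis. \<Sum>c\<in>Basis. P b * P b * app2 H c c) = (x \<bullet> x) * (\<Sum>b\<in>Basis. app2 H b b)"
    unfolding xx sum_product by (simp add: mult.assoc)
  have t4: "(\<Sum>b\<in>Basis. \<Sum>c\<in>Basis. P c * P c * app2 H b b) = (x \<bullet> x) * (\<Sum>b\<in>Basis. app2 H b b)"
    unfolding xx sum_product by (subst sum.swap) (simp add: mult.assoc)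
  have t3: "(\<Sum>b\<in>Basis. \<Sum>c\<in>Basis. P c * P b * app2 H b c) = app2 H x x"
    unfolding Hxx by (simp add: mult.commute)
  have "(\<Sum>b\<in>Basis. \<Sum>c\<in>Basis - {b}. app2 H (rotA b c x) (rotA b c x))
      = (\<Sum>b\<in>Basis. \<Sum>c\<in>Basis. app2 H (rotA b c x) (rotA b c x))"
    by (rule sum.cong) (simp_all add: s1)
  also have "\<dots> = (\<Sum>b\<in>Basis. \<Sum>c\<in>Basis. P b * P b * app2 H c c) - (\<Sum>b\<in>Basis. \<Sum>c\<in>Basis. P b * P c * app2 H c b)
      - (\<Sum>b\<in>Basis. \<Sum>c\<in>Basis. P c * P b * app2 H b c) + (\<Sum>b\<in>Basis. \<Sum>c\<in>Basis. P c * P c * app2 H b b)"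
    unfolding e by (simp add: sum.distrib sum_subtractf)
  also have "\<dots> = 2 * ((x \<bullet> x) * (\<Sum>b\<in>Basis. app2 H b b) - app2 H x x)"
    unfolding t1 t3 t4 Hxx'[symmetric] by simp
  finally show ?thesis .
qed

lemma rotA2:
  assumes "b \<in> Basis" "c \<in> Basis" "b \<noteq> c"
  shows "rotA b c (rotA b c x) = - ((x \<bullet> c) *\<^sub>R c + (x \<bullet> b) *\<^sub>R b)"
  using assms by (simp add: rotA_def inner_diff_left inner_Basis algebra_simps)

lemma sum_L:
  fixes L :: "'a::euclidean_space \<Rightarrow>\<^sub>L real"
  shows "(\<Sum>b\<in>Basis. \<Sum>c\<in>Basis - {b}. blinfun_apply L (rotA b c (rotA b c x)))
       = - 2 * (real DIM('a) - 1) * blinfun_apply L x"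
proof -
  define n where "n = real DIM('a)"
  have card: "real (card (Basis - {b::'a})) = n - 1" if "b \<in> Basis" for b
    using that DIM_positive[where 'a='a] by (simp add: n_def of_nat_diff)
  have Lx: "blinfun_apply L x = (\<Sum>c\<in>Basis. (x \<bullet> c) * blinfun_apply L c)" by (rule lin_expand)
  have inner: "(\<Sum>c\<in>Basis - {b}. blinfun_apply L (rotA b c (rotA b c x)))
        = - (blinfun_apply L x + (n - 2) * ((x \<bullet> b) * blinfun_apply L b))" if b: "b \<in> Basis" for b
  proof -
    have "(\<Sum>c\<in>Basis - {b}. blinfun_apply L (rotA b c (rotA b c x)))
        = (\<Sum>c\<in>Basis - {b}. - ((x \<bullet> c) * blinfun_apply L c + (x \<bullet> b) * blinfun_apply L b))"
      by (rule sum.cong) (use b in \<open>auto simp: rotA2 blinfun.minus_right blinfun.diff_right blinfun.add_right blinfun.scaleR_right\<close>)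
    also have "\<dots> = - ((\<Sum>c\<in>Basis - {b}. (x \<bullet> c) * blinfun_apply L c) + (n - 1) * ((x \<bullet> b) * blinfun_apply L b))"
      using card[OF b] by (simp add: sum_negf sum.distrib sum_subtractf sum_constant)
    also have "(\<Sum>c\<in>Basis - {b}. (x \<bullet> c) * blinfun_apply L c) = blinfun_apply L x - (x \<bullet> b) * blinfun_apply L b"
      using b by (simp add: sum_diff1 Lx)
    finally show ?thesis by (simp add: algebra_simps)
  qed
  have "(\<Sum>b\<in>Basis. \<Sum>c\<in>Basis - {b}. blinfun_apply L (rotA b c (rotA b c x)))
      = (\<Sum>b\<in>Basis. - (blinfun_apply L x + (n - 2) * ((x \<bullet> b) * blinfun_apply L b)))"
    by (rule sum.cong) (simp_all add: inner)
  also have "\<dots> = - (n * blinfun_apply L x + (n - 2) * blinfun_apply L x)"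
  proof -
    have "(\<Sum>b\<in>Basis. (n - 2) * ((x \<bullet> b) * blinfun_apply L b)) = (n - 2) * blinfun_apply L x"
      by (simp add: sum_distrib_left[symmetric] Lx[symmetric])
    then show ?thesis by (simp add: sum_negf sum.distrib sum_subtractf sum_constant n_def)
  qed
  finally show ?thesis unfolding n_def by (simp add: algebra_simps)
qed



lemma int_nrm_sub:
  fixes h :: "'a::euclidean_space \<Rightarrow> real"
  assumes hc: "continuous_on (sphere 0 1) h" and S: "S \<subseteq> ball 0 1 - {0}" "S \<in> lmeasurable"
  shows "(\<lambda>x. h (x /\<^sub>R norm x)) integrable_on S"
proof -
  obtain B where B: "\<And>\<omega>. \<omega> \<in> sphere 0 1 \<Longrightarrow> \<bar>h \<omega>\<bar> \<le> B" using bnd_sph[OF hc] by blast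
  show ?thesis
  proof (rule measurable_bounded_by_integrable_imp_integrable)
    show "(\<lambda>x. h (x /\<^sub>R norm x)) \<in> borel_measurable (lebesgue_on S)"
      by (rule continuous_imp_measurable_on_sets_lebesgue[OF continuous_on_subset[OF cont_nrm[OF hc] S(1)]]) (use S(2) in auto)
    show "(\<lambda>x. B) integrable_on S" by (rule integrable_on_const[OF S(2)])
    show "norm (h (x /\<^sub>R norm x)) \<le> B" if "x \<in> S" for x
    proof -
      have "x \<noteq> 0" using that S(1) by blast
      then show ?thesis using B[OF sph_nrm] by simp
    qed
    show "S \<in> sets lebesgue" using S(2) by auto
  qed
qed

lemma Avg_cong: "(\<And>\<omega>. \<omega> \<in> sphere 0 1 \<Longrightarrow> f \<omega> = g \<omega>) \<Longrightarrow> Avg f = Avg (g::'a::euclidean_space \<Rightarrow> real)"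
  unfolding Avg_def by (rule integral_cong) (simp add: sph_nrm)

lemma Avg_add: "continuous_on (sphere 0 1) f \<Longrightarrow> continuous_on (sphere 0 1) g \<Longrightarrow>
    Avg (\<lambda>\<omega>. f \<omega> + g \<omega>) = Avg f + Avg (g::'a::euclidean_space \<Rightarrow> real)"
  unfolding Avg_def by (rule integral_add) (auto intro: int_nrm)

lemma Avg_diff: "continuous_on (sphere 0 1) f \<Longrightarrow> continuous_on (sphere 0 1) g \<Longrightarrow>
    Avg (\<lambda>\<omega>. f \<omega> - g \<omega>) = Avg f - Avg (g::'a::euclidean_space \<Rightarrow> real)"
  unfolding Avg_def by (rule integral_diff) (auto intro: int_nrm)

lemma Avg_cmul: "Avg (\<lambda>\<omega>. k * f \<omega>) = k * Avg (f::'a::euclidean_space \<Rightarrow> real)"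
  unfolding Avg_def by simp

lemma Avg_const: "Avg (\<lambda>\<omega>::'a::euclidean_space. k) = k * measure lebesgue (ball (0::'a) 1 - {0})"
  unfolding Avg_def by (rule integral_const_punc)

lemma Avg_mono: "continuous_on (sphere 0 1) f \<Longrightarrow> continuous_on (sphere 0 1) g \<Longrightarrow>
    (\<And>\<omega>. \<omega> \<in> sphere 0 1 \<Longrightarrow> f \<omega> \<le> g \<omega>) \<Longrightarrow> Avg f \<le> Avg (g::'a::euclidean_space \<Rightarrow> real)"
  unfolding Avg_def by (rule integral_le) (auto intro: int_nrm sph_nrm)

lemma Avg_sum: "finite I \<Longrightarrow> (\<And>i. i \<in> I \<Longrightarrow> continuous_on (sphere 0 1) (f i)) \<Longrightarrow>
    Avg (\<lambda>\<omega>. \<Sum>i\<in>I. f i \<omega>) = (\<Sum>i\<in>I. Avg (f i :: 'a::euclidean_space \<Rightarrow> real))"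
  unfolding Avg_def by (rule integral_sum) (auto intro: int_nrm)

lemma Avg_pos_zero:
  fixes f :: "'a::euclidean_space \<Rightarrow> real"
  assumes fc: "continuous_on (sphere 0 1) f" and nn: "\<And>\<omega>. \<omega> \<in> sphere 0 1 \<Longrightarrow> f \<omega> \<ge> 0"
    and z: "Avg f = 0" and \<omega>0: "\<omega>0 \<in> sphere 0 1"
  shows "f \<omega>0 = 0"
proof (rule ccontr)
  assume "f \<omega>0 \<noteq> 0"
  then have pos: "f \<omega>0 > 0" using nn[OF \<omega>0] by simp
  let ?T = "ball (0::'a) 1 - {0}"
  let ?F = "\<lambda>x. f (x /\<^sub>R norm x)"
  define y0 where "y0 = (1/2) *\<^sub>R \<omega>0"
  have n\<omega>: "norm \<omega>0 = 1" using \<omega>0 by simp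
  have y0T: "y0 \<in> ?T" using n\<omega> by (auto simp: y0_def)
  have Fy0: "?F y0 = f \<omega>0" using n\<omega> by (simp add: y0_def)
  have oT: "open ?T" by auto
  obtain \<rho>1 where \<rho>1: "\<rho>1 > 0" "ball y0 \<rho>1 \<subseteq> ?T" using oT y0T open_contains_ball by blast
  obtain \<rho>2 where \<rho>2: "\<rho>2 > 0" "\<And>y. y \<in> ?T \<Longrightarrow> dist y y0 < \<rho>2 \<Longrightarrow> dist (?F y) (?F y0) < f \<omega>0 / 2"
    using cont_nrm[OF fc] y0T pos unfolding continuous_on_iff by (metis half_gt_zero)
  define \<rho> where "\<rho> = min \<rho>1 \<rho>2"
  have \<rho>: "\<rho> > 0" using \<rho>1 \<rho>2 by (simp add: \<rho>_def)
  have "ball y0 \<rho> \<subseteq> ball y0 \<rho>1" by (rule subset_ball) (simp add: \<rho>_def)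
  then have bT: "ball y0 \<rho> \<subseteq> ?T" using \<rho>1(2) by blast
  have lower: "?F y \<ge> f \<omega>0 / 2" if "y \<in> ball y0 \<rho>" for y
  proof -
    have yT: "y \<in> ?T" using that bT by blast
    have "dist y y0 < \<rho>2" using that by (simp add: \<rho>_def dist_commute)
    then have "dist (?F y) (?F y0) < f \<omega>0 / 2" using \<rho>2(2)[OF yT] by blast
    then have "\<bar>?F y - f \<omega>0\<bar> < f \<omega>0 / 2" using Fy0 by (simp only: dist_real_def)
    then show ?thesis unfolding abs_less_iff by linarith
  qed
  have iB: "?F integrable_on ball y0 \<rho>" by (rule int_nrm_sub[OF fc bT]) auto
  have iT: "?F integrable_on ?T" by (rule int_nrm[OF fc])
  have "0 < f \<omega>0 / 2 * measure lebesgue (ball y0 \<rho>)"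
    using pos content_ball_pos[OF \<rho>, of y0] by simp
  also have "\<dots> = integral (ball y0 \<rho>) (\<lambda>x. f \<omega>0 / 2)"
    using lmeasure_integral[of "ball y0 \<rho>"] integral_mult_right[of "ball y0 \<rho>" "f \<omega>0 / 2" "\<lambda>x. 1"]
    by simp
  also have "\<dots> \<le> integral (ball y0 \<rho>) ?F"
  proof (rule integral_le)
    show "(\<lambda>x. f \<omega>0 / 2) integrable_on ball y0 \<rho>" by (rule integrable_on_const) auto
    show "?F integrable_on ball y0 \<rho>" by (rule iB)
    show "\<And>x. x \<in> ball y0 \<rho> \<Longrightarrow> f \<omega>0 / 2 \<le> ?F x" by (rule lower)
  qed
  also have "\<dots> \<le> integral ?T ?F"
    by (rule integral_subset_le[OF bT iB iT]) (auto intro: nn sph_nrm)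
  also have "\<dots> = 0" using z unfolding Avg_def .
  finally show False by simp
qed



lemma ray_deriv:
  fixes f :: "'a::real_normed_vector \<Rightarrow> 'b::real_normed_vector"
  assumes fd: "(f has_derivative Df) (at (t *\<^sub>R \<omega>))"
  shows "((\<lambda>t. f (t *\<^sub>R \<omega>)) has_vector_derivative Df \<omega>) (at t)"
proof -
  have g: "((\<lambda>t. t *\<^sub>R \<omega>) has_derivative (\<lambda>h. h *\<^sub>R \<omega>)) (at t)"
    by (auto intro!: derivative_eq_intros)
  have lin: "linear Df" using has_derivative_linear[OF fd] .
  have "((\<lambda>t. f (t *\<^sub>R \<omega>)) has_derivative (Df \<circ> (\<lambda>h. h *\<^sub>R \<omega>))) (at t)"
    using diff_chain_at[OF g fd] by (simp add: comp_def)
  moreover have "(Df \<circ> (\<lambda>h. h *\<^sub>R \<omega>)) = (\<lambda>h. h *\<^sub>R Df \<omega>)"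
    using lin by (auto simp: fun_eq_iff linear_cmul)
  ultimately show ?thesis unfolding has_vector_derivative_def by simp
qed

locale sol =
  fixes u :: "'a::euclidean_space \<Rightarrow> real" and Du :: "'a \<Rightarrow> 'a \<Rightarrow>\<^sub>L real"
    and D2u :: "'a \<Rightarrow> 'a \<Rightarrow>\<^sub>L 'a \<Rightarrow>\<^sub>L real"
  assumes ud: "\<And>x. x \<noteq> 0 \<Longrightarrow> (u has_derivative blinfun_apply (Du x)) (at x)"
    and Dud: "\<And>x. x \<noteq> 0 \<Longrightarrow> (Du has_derivative blinfun_apply (D2u x)) (at x)"
    and D2c: "continuous_on (UNIV - {0}) D2u"
    and lap: "\<And>x. x \<noteq> 0 \<Longrightarrow> lap_of (D2u x) \<le> 0"
    and uc: "continuous_on UNIV u"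
    and unn: "\<And>x. u x \<ge> 0"
begin

lemma Duc: "continuous_on (UNIV - {0}) Du"
proof (rule continuous_at_imp_continuous_on, intro ballI)
  fix x :: 'a assume "x \<in> UNIV - {0}"
  then show "isCont Du x" using Dud has_derivative_continuous by blast
qed

lemma ray_ne0: "t > 0 \<Longrightarrow> \<omega> \<in> sphere 0 1 \<Longrightarrow> t *\<^sub>R \<omega> \<noteq> (0::'a)"
  by auto

lemma cont_ray: "continuous_on S (\<lambda>p::real \<times> 'a. fst p *\<^sub>R snd p)"
  by (intro continuous_intros)

lemma ray_img: "r > 0 \<Longrightarrow> (\<lambda>p::real \<times> 'a. fst p *\<^sub>R snd p) ` (cball r (r/2) \<times> sphere 0 1) \<subseteq> UNIV - {0}"
  by (auto simp: dist_real_def)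

lemma Du_ray_cont: "r > 0 \<Longrightarrow> continuous_on (cball r (r/2) \<times> sphere 0 1) (\<lambda>p::real \<times> 'a. Du (fst p *\<^sub>R snd p))"
  by (rule continuous_on_compose2[OF Duc cont_ray ray_img])

lemma D2u_ray_cont: "r > 0 \<Longrightarrow> continuous_on (cball r (r/2) \<times> sphere 0 1) (\<lambda>p::real \<times> 'a. D2u (fst p *\<^sub>R snd p))"
  by (rule continuous_on_compose2[OF D2c cont_ray ray_img])

lemma sph_cont_Du: "t \<noteq> 0 \<Longrightarrow> continuous_on (sphere 0 1) (\<lambda>\<omega>::'a. Du (t *\<^sub>R \<omega>))"
  by (rule continuous_on_compose2[OF Duc]) (auto intro!: continuous_intros)

lemma sph_cont_D2u: "t \<noteq> 0 \<Longrightarrow> continuous_on (sphere 0 1) (\<lambda>\<omega>::'a. D2u (t *\<^sub>R \<omega>))"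
  by (rule continuous_on_compose2[OF D2c]) (auto intro!: continuous_intros)

lemma sph_cont_u: "continuous_on (sphere 0 1) (\<lambda>\<omega>::'a. u (t *\<^sub>R \<omega>))"
  by (rule continuous_on_compose2[OF uc]) (auto intro!: continuous_intros)

lemma L1:
  assumes r: "r > 0"
  shows "((\<lambda>t. Avg (\<lambda>\<omega>. u (t *\<^sub>R \<omega>))) has_real_derivative Avg (\<lambda>\<omega>. blinfun_apply (Du (r *\<^sub>R \<omega>)) \<omega>)) (at r)"
proof (rule deriv_avg[where d="r/2"])
  show "r / 2 > 0" using r by simp
  fix t and \<omega> :: 'a assume t: "t \<in> ball r (r/2)" and \<omega>: "\<omega> \<in> sphere 0 1"
  have "t > 0" using t unfolding mem_ball dist_real_def abs_less_iff by linarith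
  then have "t *\<^sub>R \<omega> \<noteq> 0" using \<omega> by auto
  then show "((\<lambda>t. u (t *\<^sub>R \<omega>)) has_real_derivative blinfun_apply (Du (t *\<^sub>R \<omega>)) \<omega>) (at t)"
    using ray_deriv[OF ud] by (simp add: has_real_derivative_iff_has_vector_derivative)
next
  fix t :: real
  show "continuous_on (sphere 0 1) (\<lambda>\<omega>::'a. u (t *\<^sub>R \<omega>))" by (rule sph_cont_u)
next
  have "continuous_on (cball r (r/2) \<times> sphere 0 1) (\<lambda>p::real \<times> 'a. blinfun_apply (Du (fst p *\<^sub>R snd p)) (snd p))"
    by (rule blinfun.continuous_on[OF Du_ray_cont[OF r]]) (intro continuous_intros)
  then show "continuous_on (cball r (r/2) \<times> sphere 0 1) (\<lambda>(t, \<omega>::'a). blinfun_apply (Du (t *\<^sub>R \<omega>)) \<omega>)"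
    by (simp add: case_prod_beta')
qed

lemma L2:
  assumes r: "r > 0"
  shows "((\<lambda>t. Avg (\<lambda>\<omega>. blinfun_apply (Du (t *\<^sub>R \<omega>)) \<omega>)) has_real_derivative Avg (\<lambda>\<omega>. app2 (D2u (r *\<^sub>R \<omega>)) \<omega> \<omega>)) (at r)"
proof (rule deriv_avg[where d="r/2"])
  show "r / 2 > 0" using r by simp
  fix t and \<omega> :: 'a assume t: "t \<in> ball r (r/2)" and \<omega>: "\<omega> \<in> sphere 0 1"
  have "t > 0" using t unfolding mem_ball dist_real_def abs_less_iff by linarith
  then have "t *\<^sub>R \<omega> \<noteq> 0" using \<omega> by auto
  then have "((\<lambda>t. Du (t *\<^sub>R \<omega>)) has_vector_derivative blinfun_apply (D2u (t *\<^sub>R \<omega>)) \<omega>) (at t)"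
    by (rule ray_deriv[OF Dud])
  then have "((\<lambda>t. Du (t *\<^sub>R \<omega>)) has_derivative (\<lambda>h. h *\<^sub>R blinfun_apply (D2u (t *\<^sub>R \<omega>)) \<omega>)) (at t)"
    by (simp add: has_vector_derivative_def)
  from bounded_linear.has_derivative[OF blinfun.bounded_linear_left this, of \<omega>]
  have "((\<lambda>t. blinfun_apply (Du (t *\<^sub>R \<omega>)) \<omega>) has_derivative (\<lambda>h. h * app2 (D2u (t *\<^sub>R \<omega>)) \<omega> \<omega>)) (at t)"
    by (simp add: blinfun.scaleR_left)
  then show "((\<lambda>t. blinfun_apply (Du (t *\<^sub>R \<omega>)) \<omega>) has_real_derivative app2 (D2u (t *\<^sub>R \<omega>)) \<omega> \<omega>) (at t)"
    unfolding has_field_derivative_def by (simp add: mult.commute[of _ "app2 _ _ _"])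
next
  fix t :: real assume t: "t \<in> ball r (r/2)"
  have "t > 0" using t unfolding mem_ball dist_real_def abs_less_iff by linarith
  then show "continuous_on (sphere 0 1) (\<lambda>\<omega>::'a. blinfun_apply (Du (t *\<^sub>R \<omega>)) \<omega>)"
    by (intro blinfun.continuous_on[OF sph_cont_Du] continuous_intros) simp
next
  have "continuous_on (cball r (r/2) \<times> sphere 0 1) (\<lambda>p::real \<times> 'a. app2 (D2u (fst p *\<^sub>R snd p)) (snd p) (snd p))"
    by (intro blinfun.continuous_on[OF blinfun.continuous_on[OF D2u_ray_cont[OF r]]] continuous_intros)
  then show "continuous_on (cball r (r/2) \<times> sphere 0 1) (\<lambda>(t, \<omega>::'a). app2 (D2u (t *\<^sub>R \<omega>)) \<omega> \<omega>)"
    by (simp add: case_prod_beta')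
qed

lemma linA: "linear (rotA b c :: 'a \<Rightarrow> 'a)"
  by (rule linearI) (simp_all add: rotA_def algebra_simps inner_add_left)

lemma cA: "continuous_on S (rotA b c :: 'a \<Rightarrow> 'a)"
  by (rule linear_continuous_on) (simp add: linear_conv_bounded_linear[symmetric] linA)

lemma cA2: "continuous_on S (\<lambda>\<omega>::'a. rotA b c (rotA b c \<omega>))"
  by (rule continuous_on_compose2[OF cA cA]) auto

lemma Z:
  assumes r: "r > 0" and bc: "b \<in> Basis" "c \<in> Basis" "b \<noteq> c"
  shows "Avg (\<lambda>\<omega>. blinfun_apply (Du (r *\<^sub>R \<omega>)) (rotA b c (rotA b c \<omega>))
             + r * app2 (D2u (r *\<^sub>R \<omega>)) (rotA b c \<omega>) (rotA b c \<omega>)) = 0"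
proof -
  let ?U = "UNIV - {0::'a}"
  define Dw where "Dw y h = blinfun_apply (Du (r *\<^sub>R y)) (rotA b c h) + app2 (D2u (r *\<^sub>R y)) (r *\<^sub>R h) (rotA b c y)" for y h :: 'a
  have "Avg (\<lambda>\<omega>. Dw \<omega> (rotA b c \<omega>)) = 0"
  proof (rule rot_zero[OF bc, where U="?U" and w="\<lambda>y. blinfun_apply (Du (r *\<^sub>R y)) (rotA b c y)"])
    show "open ?U" by auto
    show "sphere 0 1 \<subseteq> ?U" by auto
    fix y :: 'a assume y: "y \<in> ?U"
    then have ry: "r *\<^sub>R y \<noteq> 0" using r by auto
    have s: "((\<lambda>y::'a. r *\<^sub>R y) has_derivative (\<lambda>h. r *\<^sub>R h)) (at y)"
      by (auto intro!: derivative_eq_intros)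
    have d1: "((\<lambda>y. Du (r *\<^sub>R y)) has_derivative (\<lambda>h. blinfun_apply (D2u (r *\<^sub>R y)) (r *\<^sub>R h))) (at y)"
      using diff_chain_at[OF s Dud[OF ry]] by (simp add: comp_def)
    have d2: "(rotA b c has_derivative rotA b c) (at y)" by (rule linear_imp_has_derivative[OF linA])
    show "((\<lambda>y. blinfun_apply (Du (r *\<^sub>R y)) (rotA b c y)) has_derivative Dw y) (at y)"
      using blinfun.FDERIV[OF d1 d2] unfolding Dw_def[abs_def] by simp
  next
    have c1: "continuous_on (?U \<times> UNIV) (\<lambda>p::'a \<times> 'a. Du (r *\<^sub>R fst p))"
      by (rule continuous_on_compose2[OF Duc]) (use r in \<open>auto intro!: continuous_intros\<close>)
    have c2: "continuous_on (?U \<times> UNIV) (\<lambda>p::'a \<times> 'a. D2u (r *\<^sub>R fst p))"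
      by (rule continuous_on_compose2[OF D2c]) (use r in \<open>auto intro!: continuous_intros\<close>)
    have c3: "continuous_on (?U \<times> UNIV) (\<lambda>p::'a \<times> 'a. rotA b c (snd p))"
      by (rule continuous_on_compose2[OF cA]) (auto intro!: continuous_intros)
    have c4: "continuous_on (?U \<times> UNIV) (\<lambda>p::'a \<times> 'a. rotA b c (fst p))"
      by (rule continuous_on_compose2[OF cA]) (auto intro!: continuous_intros)
    have "continuous_on (?U \<times> UNIV) (\<lambda>p::'a \<times> 'a. Dw (fst p) (snd p))"
      unfolding Dw_def
      by (intro continuous_on_add blinfun.continuous_on[OF c1 c3] blinfun.continuous_on[OF blinfun.continuous_on[OF c2] c4] continuous_intros)
    then show "continuous_on (?U \<times> UNIV) (\<lambda>(y, h). Dw y h)" by (simp add: case_prod_beta')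
  qed
  moreover have "Dw \<omega> (rotA b c \<omega>) = blinfun_apply (Du (r *\<^sub>R \<omega>)) (rotA b c (rotA b c \<omega>))
             + r * app2 (D2u (r *\<^sub>R \<omega>)) (rotA b c \<omega>) (rotA b c \<omega>)" for \<omega>
    unfolding Dw_def by (simp add: blinfun.scaleR_right blinfun.scaleR_left)
  ultimately show ?thesis by simp
qed

lemma cL: "r \<noteq> 0 \<Longrightarrow> continuous_on (sphere 0 1) (\<lambda>\<omega>::'a. blinfun_apply (Du (r *\<^sub>R \<omega>)) \<omega>)"
  by (intro blinfun.continuous_on[OF sph_cont_Du] continuous_intros)

lemma cH: "r \<noteq> 0 \<Longrightarrow> continuous_on (sphere 0 1) (\<lambda>\<omega>::'a. app2 (D2u (r *\<^sub>R \<omega>)) \<omega> \<omega>)"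
  by (intro blinfun.continuous_on[OF blinfun.continuous_on[OF sph_cont_D2u]] continuous_intros)

lemma cLap: "r \<noteq> 0 \<Longrightarrow> continuous_on (sphere 0 1) (\<lambda>\<omega>::'a. lap_of (D2u (r *\<^sub>R \<omega>)))"
  unfolding lap_of_def
  by (intro continuous_on_sum blinfun.continuous_on[OF blinfun.continuous_on[OF sph_cont_D2u]] continuous_intros)

lemma cT: "r \<noteq> 0 \<Longrightarrow> continuous_on (sphere 0 1) (\<lambda>\<omega>::'a. blinfun_apply (Du (r *\<^sub>R \<omega>)) (rotA b c (rotA b c \<omega>))
             + r * app2 (D2u (r *\<^sub>R \<omega>)) (rotA b c \<omega>) (rotA b c \<omega>))"
  by (intro continuous_on_add continuous_on_mult continuous_on_const
      blinfun.continuous_on[OF sph_cont_Du cA2] blinfun.continuous_on[OF blinfun.continuous_on[OF sph_cont_D2u cA] cA])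

lemma L3:
  assumes r: "r > 0"
  shows "r * Avg (\<lambda>\<omega>. lap_of (D2u (r *\<^sub>R \<omega>))) =
         r * Avg (\<lambda>\<omega>. app2 (D2u (r *\<^sub>R \<omega>)) \<omega> \<omega>) + (real DIM('a) - 1) * Avg (\<lambda>\<omega>. blinfun_apply (Du (r *\<^sub>R \<omega>)) \<omega>)"
proof -
  have r0: "r \<noteq> 0" using r by simp
  define T where "T b c \<omega> = blinfun_apply (Du (r *\<^sub>R \<omega>)) (rotA b c (rotA b c \<omega>))
             + r * app2 (D2u (r *\<^sub>R \<omega>)) (rotA b c \<omega>) (rotA b c \<omega>)" for b c and \<omega> :: 'a
  have cT': "continuous_on (sphere 0 1) (T b c)" for b c unfolding T_def[abs_def] by (rule cT[OF r0])
  have z: "Avg (T b c) = 0" if "b \<in> Basis" "c \<in> Basis - {b}" for b c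
    using Z[OF r, of b c] that unfolding T_def[abs_def] by auto
  have "0 = (\<Sum>b\<in>Basis. \<Sum>c\<in>Basis - {b}. Avg (T b c))"
    using z by (simp add: sum.neutral)
  also have "\<dots> = Avg (\<lambda>\<omega>. \<Sum>b\<in>Basis. \<Sum>c\<in>Basis - {b}. T b c \<omega>)"
    by (simp add: Avg_sum cT' continuous_on_sum)
  also have "\<dots> = Avg (\<lambda>\<omega>. 2 * r * lap_of (D2u (r *\<^sub>R \<omega>)) - 2 * r * app2 (D2u (r *\<^sub>R \<omega>)) \<omega> \<omega>
       - 2 * (real DIM('a) - 1) * blinfun_apply (Du (r *\<^sub>R \<omega>)) \<omega>)"
  proof (rule Avg_cong)
    fix \<omega> :: 'a assume \<omega>: "\<omega> \<in> sphere 0 1"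
    have one: "\<omega> \<bullet> \<omega> = 1" using \<omega> by (simp add: norm_eq_1[symmetric])
    have "(\<Sum>b\<in>Basis. \<Sum>c\<in>Basis - {b}. T b c \<omega>) =
        (\<Sum>b\<in>Basis. \<Sum>c\<in>Basis - {b}. blinfun_apply (Du (r *\<^sub>R \<omega>)) (rotA b c (rotA b c \<omega>)))
        + r * (\<Sum>b\<in>Basis. \<Sum>c\<in>Basis - {b}. app2 (D2u (r *\<^sub>R \<omega>)) (rotA b c \<omega>) (rotA b c \<omega>))"
      unfolding T_def by (simp add: sum.distrib sum_distrib_left)
    also have "\<dots> = - 2 * (real DIM('a) - 1) * blinfun_apply (Du (r *\<^sub>R \<omega>)) \<omega>
        + r * (2 * ((\<omega> \<bullet> \<omega>) * (\<Sum>b\<in>Basis. app2 (D2u (r *\<^sub>R \<omega>)) b b) - app2 (D2u (r *\<^sub>R \<omega>)) \<omega> \<omega>))"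
      by (simp only: sum_L sum_H)
    also have "\<dots> = 2 * r * lap_of (D2u (r *\<^sub>R \<omega>)) - 2 * r * app2 (D2u (r *\<^sub>R \<omega>)) \<omega> \<omega>
       - 2 * (real DIM('a) - 1) * blinfun_apply (Du (r *\<^sub>R \<omega>)) \<omega>"
      unfolding one lap_of_def by (simp add: algebra_simps)
    finally show "(\<Sum>b\<in>Basis. \<Sum>c\<in>Basis - {b}. T b c \<omega>) = 2 * r * lap_of (D2u (r *\<^sub>R \<omega>)) - 2 * r * app2 (D2u (r *\<^sub>R \<omega>)) \<omega> \<omega>
       - 2 * (real DIM('a) - 1) * blinfun_apply (Du (r *\<^sub>R \<omega>)) \<omega>" .
  qed
  also have "\<dots> = 2 * r * Avg (\<lambda>\<omega>. lap_of (D2u (r *\<^sub>R \<omega>))) - 2 * r * Avg (\<lambda>\<omega>. app2 (D2u (r *\<^sub>R \<omega>)) \<omega> \<omega>)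
       - 2 * (real DIM('a) - 1) * Avg (\<lambda>\<omega>. blinfun_apply (Du (r *\<^sub>R \<omega>)) \<omega>)"
    by (simp add: Avg_diff Avg_cmul continuous_on_mult continuous_on_const continuous_on_diff cL[OF r0] cH[OF r0] cLap[OF r0])
  finally show ?thesis by (simp add: algebra_simps)
qed

end



context sol
begin

lemma c0_pos: "measure lborel (ball (0::'a) 1) > 0" by (rule content_ball_pos) simp

lemma mu_c0: "measure lebesgue (ball (0::'a) 1 - {0}) = measure lborel (ball (0::'a) 1)"
proof -
  have "measure lebesgue (ball (0::'a) 1 - {0}) = measure lebesgue (ball (0::'a) 1)"
    by (rule measure_negligible_symdiff) (auto intro: negligible_subset[of "{0}"])
  then show ?thesis by simp
qed

lemma sph_eq: "t \<noteq> 0 \<Longrightarrow> sph_avg u t = Avg (\<lambda>\<omega>. u (t *\<^sub>R \<omega>)) / measure lborel (ball (0::'a) 1)"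
proof -
  assume t: "t \<noteq> 0"
  have "integral (ball 0 1) (\<lambda>x::'a. u (t *\<^sub>R (x /\<^sub>R norm x))) = integral (ball 0 1 - {0}) (\<lambda>x::'a. u (t *\<^sub>R (x /\<^sub>R norm x)))"
    by (rule integral_spike_set) (auto intro: negligible_subset[of "{0}"])
  then show ?thesis using t unfolding sph_avg_def Avg_def by simp
qed

lemma Phi_nonneg: "Avg (\<lambda>\<omega>::'a. u (t *\<^sub>R \<omega>)) \<ge> 0"
proof -
  have "Avg (\<lambda>\<omega>::'a. 0) \<le> Avg (\<lambda>\<omega>::'a. u (t *\<^sub>R \<omega>))"
    by (rule Avg_mono) (auto intro: sph_cont_u unn)
  then show ?thesis by (simp add: Avg_const)
qed

lemma Lam_nonpos: "r > 0 \<Longrightarrow> Avg (\<lambda>\<omega>::'a. lap_of (D2u (r *\<^sub>R \<omega>))) \<le> 0"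
proof -
  assume r: "r > 0"
  have "Avg (\<lambda>\<omega>::'a. lap_of (D2u (r *\<^sub>R \<omega>))) \<le> Avg (\<lambda>\<omega>::'a. 0)"
    by (rule Avg_mono) (use r in \<open>auto intro: cLap lap\<close>)
  then show ?thesis by (simp add: Avg_const)
qed

lemma sph_deriv: "r > 0 \<Longrightarrow> (sph_avg u has_real_derivative Avg (\<lambda>\<omega>. blinfun_apply (Du (r *\<^sub>R \<omega>)) \<omega>) / measure lborel (ball (0::'a) 1)) (at r)"
proof -
  assume r: "r > 0"
  have "((\<lambda>t. Avg (\<lambda>\<omega>. u (t *\<^sub>R \<omega>)) / measure lborel (ball (0::'a) 1)) has_real_derivative Avg (\<lambda>\<omega>. blinfun_apply (Du (r *\<^sub>R \<omega>)) \<omega>) / measure lborel (ball (0::'a) 1)) (at r)"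
    by (rule DERIV_cdivide[OF L1[OF r]])
  then show ?thesis
    by (rule has_field_derivative_transform_within_open[where S="{0<..}"]) (use r sph_eq in auto)
qed

lemma M_deriv:
  assumes n: "DIM('a) \<ge> 2" and r: "r > 0"
  shows "((\<lambda>t. t ^ (DIM('a) - 1) * Avg (\<lambda>\<omega>::'a. blinfun_apply (Du (t *\<^sub>R \<omega>)) \<omega>)) has_real_derivative
      r ^ (DIM('a) - 2) * (r * Avg (\<lambda>\<omega>::'a. lap_of (D2u (r *\<^sub>R \<omega>))))) (at r)"
proof -
  define k where "k = DIM('a) - 1"
  have k: "k \<ge> 1" "DIM('a) - 2 = k - 1" using n by (auto simp: k_def)
  have "((\<lambda>t. t ^ k * Avg (\<lambda>\<omega>::'a. blinfun_apply (Du (t *\<^sub>R \<omega>)) \<omega>)) has_real_derivative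
      real k * r ^ (k - Suc 0) * Avg (\<lambda>\<omega>::'a. blinfun_apply (Du (r *\<^sub>R \<omega>)) \<omega>) + Avg (\<lambda>\<omega>. app2 (D2u (r *\<^sub>R \<omega>)) \<omega> \<omega>) * r ^ k) (at r)"
    by (rule DERIV_mult[OF DERIV_pow L2[OF r]])
  moreover have "real k * r ^ (k - Suc 0) * Avg (\<lambda>\<omega>::'a. blinfun_apply (Du (r *\<^sub>R \<omega>)) \<omega>) + Avg (\<lambda>\<omega>. app2 (D2u (r *\<^sub>R \<omega>)) \<omega> \<omega>) * r ^ k
      = r ^ (k - 1) * (r * Avg (\<lambda>\<omega>::'a. lap_of (D2u (r *\<^sub>R \<omega>))))"
  proof -
    have rk: "r ^ k = r ^ (k - 1) * r" using k(1) by (metis Suc_diff_le diff_Suc_1 power_Suc2)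
    have rkn: "real k = real DIM('a) - 1" using n by (simp add: k_def of_nat_diff)
    obtain Ps X La where PXL: "Ps = Avg (\<lambda>\<omega>::'a. blinfun_apply (Du (r *\<^sub>R \<omega>)) \<omega>)"
      "X = Avg (\<lambda>\<omega>. app2 (D2u (r *\<^sub>R \<omega>)) \<omega> \<omega>)" "La = Avg (\<lambda>\<omega>::'a. lap_of (D2u (r *\<^sub>R \<omega>)))" by blast
    have L3': "r * La = r * X + real k * Ps" using L3[OF r] rkn PXL by simp
    have "real k * r ^ (k - Suc 0) * Ps + X * r ^ k = r ^ (k - 1) * (r * X + real k * Ps)"
      unfolding rk by (simp add: algebra_simps)
    also have "\<dots> = r ^ (k - 1) * (r * La)" using L3' by simp
    finally show ?thesis using PXL by simp
  qed
  ultimately show ?thesis unfolding k_def[symmetric] k(2) by simp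
qed

lemma M_mono:
  assumes n: "DIM('a) \<ge> 2" and r: "0 < r" and rs: "r \<le> s"
  shows "s ^ (DIM('a) - 1) * Avg (\<lambda>\<omega>::'a. blinfun_apply (Du (s *\<^sub>R \<omega>)) \<omega>)
      \<le> r ^ (DIM('a) - 1) * Avg (\<lambda>\<omega>::'a. blinfun_apply (Du (r *\<^sub>R \<omega>)) \<omega>)"
proof (rule DERIV_nonpos_imp_nonincreasing[OF rs])
  fix x assume x: "r \<le> x" "x \<le> s"
  then have x0: "x > 0" using r by simp
  have "x ^ (DIM('a) - 2) * (x * Avg (\<lambda>\<omega>::'a. lap_of (D2u (x *\<^sub>R \<omega>)))) \<le> 0"
    using x0 Lam_nonpos[OF x0] by (simp add: mult_nonneg_nonpos)
  then show "\<exists>y. ((\<lambda>t. t ^ (DIM('a) - 1) * Avg (\<lambda>\<omega>::'a. blinfun_apply (Du (t *\<^sub>R \<omega>)) \<omega>)) has_real_derivative y) (at x) \<and> y \<le> 0"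
    using M_deriv[OF n x0] by blast
qed

lemma M_nonpos:
  assumes n: "DIM('a) \<ge> 2" and r0: "0 < r0"
  shows "r0 ^ (DIM('a) - 1) * Avg (\<lambda>\<omega>::'a. blinfun_apply (Du (r0 *\<^sub>R \<omega>)) \<omega>) \<le> 0"
proof (rule ccontr)
  define k where "k = DIM('a) - 1"
  have k1: "k \<ge> 1" using n by (simp add: k_def)
  define Psi where "Psi t = Avg (\<lambda>\<omega>::'a. blinfun_apply (Du (t *\<^sub>R \<omega>)) \<omega>)" for t
  define Phi where "Phi t = Avg (\<lambda>\<omega>::'a. u (t *\<^sub>R \<omega>))" for t
  assume "\<not> r0 ^ (DIM('a) - 1) * Avg (\<lambda>\<omega>::'a. blinfun_apply (Du (r0 *\<^sub>R \<omega>)) \<omega>) \<le> 0"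
  then have m: "r0 ^ k * Psi r0 > 0" by (simp add: k_def Psi_def)
  define m where "m = r0 ^ k * Psi r0"
  define K where "K = m / r0 ^ (k - 1)"
  have K: "K > 0" using m r0 by (simp add: K_def m_def)
  have low: "K / t \<le> Psi t" if t: "0 < t" "t \<le> r0" for t
  proof -
    have mt: "m \<le> t ^ k * Psi t" using M_mono[OF n t] unfolding m_def Psi_def k_def by simp
    have tk: "t ^ k = t * t ^ (k - 1)" using k1 by (metis Suc_diff_le diff_Suc_1 power_Suc)
    have tk2: "t ^ (k - 1) \<le> r0 ^ (k - 1)" using t by (simp add: power_mono)
    have Pp: "Psi t \<ge> 0"
    proof (rule ccontr)
      assume "\<not> Psi t \<ge> 0"
      then have "t ^ k * Psi t < 0" using t by (simp add: mult_pos_neg)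
      then show False using mt m m_def by simp
    qed
    have "m \<le> t * t ^ (k - 1) * Psi t" using mt tk by simp
    also have "\<dots> \<le> t * r0 ^ (k - 1) * Psi t"
      using tk2 t Pp by (simp add: mult_left_mono mult_right_mono)
    finally have "m / r0 ^ (k - 1) \<le> t * Psi t" using r0 by (simp add: field_simps)
    then show ?thesis using t unfolding K_def by (simp add: field_simps)
  qed
  define g where "g t = Phi t - K * ln t" for t
  have gd: "(g has_real_derivative Psi t - K * (1 / t)) (at t)" if "t > 0" for t
    using DERIV_diff[OF L1[OF that] DERIV_cmult[OF DERIV_ln_divide[OF that], of K]]
    unfolding g_def[abs_def] Phi_def Psi_def by simp
  define \<epsilon> where "\<epsilon> = r0 * exp (- ((Phi r0 + 1) / K))"
  have Phi0: "Phi t \<ge> 0" for t unfolding Phi_def by (rule Phi_nonneg)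
  have e0: "\<epsilon> > 0" using r0 by (simp add: \<epsilon>_def)
  have "exp (- ((Phi r0 + 1) / K)) \<le> 1" using Phi0[of r0] K by simp
  then have er: "\<epsilon> \<le> r0" using r0 unfolding \<epsilon>_def by (simp add: mult_left_le)
  have "g \<epsilon> \<le> g r0"
  proof (rule DERIV_nonneg_imp_nondecreasing[OF er])
    fix x assume x: "\<epsilon> \<le> x" "x \<le> r0"
    then have x0: "x > 0" using e0 by simp
    have "K * (1 / x) \<le> Psi x" using low[OF x0 x(2)] by simp
    then show "\<exists>y. (g has_real_derivative y) (at x) \<and> y \<ge> 0" using gd[OF x0] by force
  qed
  moreover have "ln \<epsilon> = ln r0 - (Phi r0 + 1) / K" using r0 by (simp add: \<epsilon>_def ln_mult)
  ultimately have "Phi \<epsilon> - K * (ln r0 - (Phi r0 + 1) / K) \<le> Phi r0 - K * ln r0" unfolding g_def by simp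
  moreover have "K * (ln r0 - (Phi r0 + 1) / K) = K * ln r0 - (Phi r0 + 1)" using K by (simp add: right_diff_distrib)
  ultimately have "Phi \<epsilon> \<le> -1" by linarith
  then show False using Phi0[of \<epsilon>] by simp
qed

lemma Psi_nonpos:
  assumes n: "DIM('a) \<ge> 2" and r: "0 < r"
  shows "Avg (\<lambda>\<omega>::'a. blinfun_apply (Du (r *\<^sub>R \<omega>)) \<omega>) \<le> 0"
proof (rule ccontr)
  assume "\<not> ?thesis"
  then have "r ^ (DIM('a) - 1) * Avg (\<lambda>\<omega>::'a. blinfun_apply (Du (r *\<^sub>R \<omega>)) \<omega>) > 0" using r by simp
  then show False using M_nonpos[OF n r] by simp
qed

lemma phi_mono:
  assumes n: "DIM('a) \<ge> 2" and r: "0 < r" and rs: "r \<le> s"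
  shows "sph_avg u s \<le> sph_avg u r"
proof (rule DERIV_nonpos_imp_nonincreasing[OF rs])
  fix x assume x: "r \<le> x" "x \<le> s"
  then have x0: "x > 0" using r by simp
  have "Avg (\<lambda>\<omega>::'a. blinfun_apply (Du (x *\<^sub>R \<omega>)) \<omega>) / measure lborel (ball (0::'a) 1) \<le> 0"
    using Psi_nonpos[OF n x0] c0_pos by (simp add: divide_nonpos_pos)
  then show "\<exists>y. (sph_avg u has_real_derivative y) (at x) \<and> y \<le> 0"
    using sph_deriv[OF x0] by blast
qed

lemma phi_le_u0:
  assumes n: "DIM('a) \<ge> 2" and r: "0 < r"
  shows "sph_avg u r \<le> u 0"
proof (rule field_le_epsilon)
  fix e :: real assume e: "e > 0"
  obtain \<delta> where \<delta>: "\<delta> > 0" "\<And>y. dist y 0 < \<delta> \<Longrightarrow> dist (u y) (u 0) < e"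
    using uc e unfolding continuous_on_iff by (metis UNIV_I)
  define \<epsilon> where "\<epsilon> = min r (\<delta> / 2)"
  have e0: "\<epsilon> > 0" "\<epsilon> \<le> r" "\<epsilon> < \<delta>" using r \<delta> by (auto simp: \<epsilon>_def)
  have "Avg (\<lambda>\<omega>::'a. u (\<epsilon> *\<^sub>R \<omega>)) \<le> Avg (\<lambda>\<omega>::'a. u 0 + e)"
  proof (rule Avg_mono)
    show "continuous_on (sphere 0 1) (\<lambda>\<omega>::'a. u (\<epsilon> *\<^sub>R \<omega>))" by (rule sph_cont_u)
    show "continuous_on (sphere 0 1) (\<lambda>\<omega>::'a. u 0 + e)" by simp
    fix \<omega> :: 'a assume "\<omega> \<in> sphere 0 1"
    then have "dist (\<epsilon> *\<^sub>R \<omega>) 0 < \<delta>" using e0 by simp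
    then have "dist (u (\<epsilon> *\<^sub>R \<omega>)) (u 0) < e" by (rule \<delta>(2))
    then show "u (\<epsilon> *\<^sub>R \<omega>) \<le> u 0 + e" by (simp add: dist_real_def)
  qed
  also have "\<dots> = (u 0 + e) * measure lborel (ball (0::'a) 1)" by (simp add: Avg_const mu_c0)
  finally have "sph_avg u \<epsilon> \<le> u 0 + e" using c0_pos e0 by (simp add: sph_eq pos_divide_le_eq)
  moreover have "sph_avg u r \<le> sph_avg u \<epsilon>" by (rule phi_mono[OF n e0(1) e0(2)])
  ultimately show "sph_avg u r \<le> u 0 + e" by simp
qed

lemma u0_pos:
  assumes n: "DIM('a) \<ge> 2" and nz: "\<exists>x. u x \<noteq> 0"
  shows "u 0 > 0"
proof (rule ccontr)
  assume "\<not> u 0 > 0"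
  then have u0: "u 0 = 0" using unn[of 0] by simp
  obtain x where x: "u x \<noteq> 0" using nz by blast
  then have x0: "x \<noteq> 0" using u0 by auto
  define r where "r = norm x"
  have r: "r > 0" using x0 by (simp add: r_def)
  have "sph_avg u r \<le> 0" using phi_le_u0[OF n r] u0 by simp
  then have "Avg (\<lambda>\<omega>::'a. u (r *\<^sub>R \<omega>)) \<le> 0" using r c0_pos by (simp add: sph_eq divide_le_0_iff)
  then have A0: "Avg (\<lambda>\<omega>::'a. u (r *\<^sub>R \<omega>)) = 0" using Phi_nonneg[of r] by simp
  have "u (r *\<^sub>R (x /\<^sub>R norm x)) = 0"
    by (rule Avg_pos_zero[OF sph_cont_u _ A0]) (auto simp: unn x0)
  then show False using x x0 by (simp add: r_def)
qed

end



theorem lemma2p1: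
  fixes u :: "'a::euclidean_space \<Rightarrow> real" and \<sigma> p :: real
  assumes "DIM('a) \<ge> 2"
    and "p \<noteq> 0"
    and "\<forall>x. u x \<ge> 0"
    and "\<exists>x. u x \<noteq> 0"
    and "classical_solution \<sigma> p u"
  shows "(\<forall>r>0. sph_avg u differentiable at r)
       \<and> (\<forall>r s. 0 < r \<and> r \<le> s \<longrightarrow> sph_avg u s \<le> sph_avg u r)
       \<and> (\<forall>r s. 0 < r \<and> r \<le> s \<longrightarrow>
             s ^ (DIM('a) - 1) * deriv (sph_avg u) s \<le> r ^ (DIM('a) - 1) * deriv (sph_avg u) r)
       \<and> (\<forall>r>0. r ^ (DIM('a) - 1) * deriv (sph_avg u) r \<le> 0 \<and> sph_avg u r \<le> u 0)
       \<and> u 0 > 0"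
proof -
  note n = assms(1)
  define S where "S = (if \<sigma> \<ge> 0 then UNIV else UNIV - {0::'a})"
  obtain Du D2u where C2: "C2_with S u Du D2u"
      and eqn: "\<And>x. x \<in> S \<Longrightarrow> - lap_of (D2u x) = weight \<sigma> x * (u x powr p)"
      and ucont: "continuous_on UNIV u"
    using assms(5) unfolding classical_solution_def Let_def S_def by metis
  have sub: "x \<in> S" if "x \<noteq> 0" for x using that by (simp add: S_def)
  have subS: "UNIV - {0} \<subseteq> S" using sub by blast
  interpret sol u Du D2u
  proof
    show "(u has_derivative blinfun_apply (Du x)) (at x)" if "x \<noteq> 0" for x
      using C2 sub[OF that] unfolding C2_with_def by blast
    show "(Du has_derivative blinfun_apply (D2u x)) (at x)" if "x \<noteq> 0" for x
      using C2 sub[OF that] unfolding C2_with_def by blast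
    show "continuous_on (UNIV - {0}) D2u"
      using C2 continuous_on_subset[OF _ subS] unfolding C2_with_def by blast
    show "lap_of (D2u x) \<le> 0" if "x \<noteq> 0" for x
    proof -
      have "weight \<sigma> x \<ge> 0" using that by (simp add: weight_def)
      moreover have "u x powr p \<ge> 0" by simp
      ultimately have "weight \<sigma> x * (u x powr p) \<ge> 0" by simp
      then show ?thesis using eqn[OF sub[OF that]] by simp
    qed
    show "continuous_on UNIV u" by (rule ucont)
    show "u x \<ge> 0" for x using assms(3) by blast
  qed
  have c0: "measure lborel (ball (0::'a) 1) > 0" by (rule c0_pos)
  have dv: "deriv (sph_avg u) r = Avg (\<lambda>\<omega>::'a. blinfun_apply (Du (r *\<^sub>R \<omega>)) \<omega>) / measure lborel (ball (0::'a) 1)"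
    if "r > 0" for r
    by (rule DERIV_imp_deriv[OF sph_deriv[OF that]])
  have P1: "\<forall>r>0. sph_avg u differentiable at r"
    using sph_deriv has_field_derivative_imp_has_derivative differentiableI by blast
  have P2: "\<forall>r s. 0 < r \<and> r \<le> s \<longrightarrow> sph_avg u s \<le> sph_avg u r"
    using phi_mono[OF n] by blast
  have P3: "\<forall>r s. 0 < r \<and> r \<le> s \<longrightarrow>
             s ^ (DIM('a) - 1) * deriv (sph_avg u) s \<le> r ^ (DIM('a) - 1) * deriv (sph_avg u) r"
  proof (intro allI impI)
    fix r s :: real assume rs: "0 < r \<and> r \<le> s"
    have s0: "s > 0" using rs by simp
    have "s ^ (DIM('a) - 1) * Avg (\<lambda>\<omega>::'a. blinfun_apply (Du (s *\<^sub>R \<omega>)) \<omega>) / measure lborel (ball (0::'a) 1)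
        \<le> r ^ (DIM('a) - 1) * Avg (\<lambda>\<omega>::'a. blinfun_apply (Du (r *\<^sub>R \<omega>)) \<omega>) / measure lborel (ball (0::'a) 1)"
      using M_mono[OF n] rs c0 by (simp add: divide_right_mono)
    then show "s ^ (DIM('a) - 1) * deriv (sph_avg u) s \<le> r ^ (DIM('a) - 1) * deriv (sph_avg u) r"
      using dv[OF s0] dv[of r] rs by simp
  qed
  have P4: "\<forall>r>0. r ^ (DIM('a) - 1) * deriv (sph_avg u) r \<le> 0 \<and> sph_avg u r \<le> u 0"
  proof (intro allI impI conjI)
    fix r :: real assume r: "r > 0"
    have "r ^ (DIM('a) - 1) * Avg (\<lambda>\<omega>::'a. blinfun_apply (Du (r *\<^sub>R \<omega>)) \<omega>) / measure lborel (ball (0::'a) 1) \<le> 0"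
      using M_nonpos[OF n r] c0 by (simp add: divide_nonpos_pos)
    then show "r ^ (DIM('a) - 1) * deriv (sph_avg u) r \<le> 0" using dv[OF r] by simp
    show "sph_avg u r \<le> u 0" by (rule phi_le_u0[OF n r])
  qed
  have P5: "u 0 > 0" by (rule u0_pos[OF n assms(4)])
  show ?thesis using P1 P2 P3 P4 P5 by blast
qed


end
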